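(* Let $\Omega=(0,1)$ and for $h=1/N$, $N\in\mathbb N$, let $Y_h\subset H^1_0(0,1)\cap H^2(0,1)$ be the space of $C^1$ piecewise quadratic splines on the uniform mesh with nodes $k/N$, vanishing at $0$ and $1$. For $\overline{y}\in L^2(0,1)$ and $\varrho=h^4$ let $y_{\varrho h}\in Y_h$ satisfy $$\int_0^1 y_{\varrho h}y_h\,dx+\varrho\int_0^1 y_{\varrho h}''y_h''\,dx=\int_0^1\overline{y}\,y_h\,dx\quad\text{for all }y_h\in Y_h.$$ Then $\|y_{\varrho h}-\overline{y}\|_{L^2(0,1)}\le c\|\overline{y}\|_{L^2(0,1)}$ for $\overline{y}\in L^2(0,1)$, $\|y_{\varrho h}-\overline{y}\|_{L^2(0,1)}\le c\,h^2\|\overline{y}''\|_{L^2(0,1)}$ for $\overline{y}\in H^1_0(0,1)\cap H^2(0,1)$, and $\|y_{\varrho h}-\overline{y}\|_{L^2(0,1)}\le c\,h^{2s}\|\overline{y}\|_{[L^2(0,1),H^1_0(0,1)\cap H^2(0,1)]_s}$ for $\overline{y}\in[L^2(0,1),H^1_0(0,1)\cap H^2(0,1)]_s$, $s\in[0,1]$, with $c$ independent of $h$ and $\overline{y}$.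
   Context: $H^1_0(0,1)\cap H^2(0,1)$ is normed by $\|y''\|_{L^2(0,1)}$; $[\cdot,\cdot]_s$ denotes interpolation of exponent $s$ (e.g. the real $K$-method). The discrete problem is the state-based optimality condition for minimizing $\frac12\|y-\overline y\|_{L^2}^2+\frac\varrho2\|u\|_{L^2}^2$ subject to $-y''=u$, $y(0)=y(1)=0$. *)

theory Defs
  imports "HOL-Analysis.Analysis"
begin

text \<open>The interval is the closed interval [0,1] (measure-theoretically the same as (0,1)).\<close>

definition L2 :: "(real \<Rightarrow> real) \<Rightarrow> bool" where
  "L2 f \<longleftrightarrow> f \<in> borel_measurable (lebesgue_on {0..1})
     \<and> integrable (lebesgue_on {0..1}) (\<lambda>x. (f x)\<^sup>2)"

definition L2norm :: "(real \<Rightarrow> real) \<Rightarrow> real" where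
  "L2norm f = sqrt (integral\<^sup>L (lebesgue_on {0..1}) (\<lambda>x. (f x)\<^sup>2))"

text \<open>H2_0 y g: y belongs to H^1_0(0,1) \<inter> H^2(0,1) with second (weak) derivative g,
  i.e. g is in L2, y' is absolutely continuous with y'' = g, y is absolutely continuous
  with derivative y', and y(0) = y(1) = 0.\<close>
definition H2_0 :: "(real \<Rightarrow> real) \<Rightarrow> (real \<Rightarrow> real) \<Rightarrow> bool" where
  "H2_0 y g \<longleftrightarrow> L2 g \<and> y 0 = 0 \<and> y 1 = 0 \<and>
     (\<exists>y1. \<forall>x\<in>{0..1}.
        y1 x = y1 0 + integral\<^sup>L (lebesgue_on {0..x}) g \<and>
        y x = y 0 + integral\<^sup>L (lebesgue_on {0..x}) y1)"

definition spline_space :: "nat \<Rightarrow> (real \<Rightarrow> real) set" where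
  "spline_space N = {y. y 0 = 0 \<and> y 1 = 0 \<and>
     (\<exists>y'. continuous_on {0..1} y' \<and>
        (\<forall>x\<in>{0..1}. (y has_real_derivative y' x) (at x within {0..1}))) \<and>
     (\<forall>k<N. \<exists>a b c. \<forall>x\<in>{real k / real N .. real (Suc k) / real N}.
        y x = a + b * x + c * x\<^sup>2)}"

definition discrete_sol :: "nat \<Rightarrow> real \<Rightarrow> (real \<Rightarrow> real) \<Rightarrow> (real \<Rightarrow> real) \<Rightarrow> bool" where
  "discrete_sol N \<rho> ybar y \<longleftrightarrow> y \<in> spline_space N \<and>
     (\<forall>yh \<in> spline_space N. \<forall>g gh. H2_0 y g \<longrightarrow> H2_0 yh gh \<longrightarrow>
        integral\<^sup>L (lebesgue_on {0..1}) (\<lambda>x. y x * yh x)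
        + \<rho> * integral\<^sup>L (lebesgue_on {0..1}) (\<lambda>x. g x * gh x)
        = integral\<^sup>L (lebesgue_on {0..1}) (\<lambda>x. ybar x * yh x))"

text \<open>K-functional of the couple (L2, H^1_0 \<inter> H^2), the latter normed by the L2 norm of y''.\<close>
definition Kfun :: "real \<Rightarrow> (real \<Rightarrow> real) \<Rightarrow> real" where
  "Kfun t u = Inf {L2norm (\<lambda>x. u x - v x) + t * L2norm g | v g. H2_0 v g}"

definition Kint :: "real \<Rightarrow> (real \<Rightarrow> real) \<Rightarrow> ennreal" where
  "Kint s u = (\<integral>\<^sup>+ t. ennreal ((t powr (- s) * Kfun t u)\<^sup>2 / t) \<partial>(lebesgue_on {0<..}))"

text \<open>Real interpolation space [L2, H^1_0 \<inter> H^2]_s = (L2, H^1_0 \<inter> H^2)_{s,2}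
  (K-method), with the usual endpoint conventions for s = 0 and s = 1.\<close>
definition interp_space :: "real \<Rightarrow> (real \<Rightarrow> real) set" where
  "interp_space s = {u. L2 u \<and>
     (if s = 0 then True
      else if s = 1 then (\<exists>v g. H2_0 v g \<and> (AE x in lebesgue_on {0..1}. u x = v x))
      else Kint s u < \<infinity>)}"

definition interp_norm :: "real \<Rightarrow> (real \<Rightarrow> real) \<Rightarrow> real" where
  "interp_norm s u =
     (if s = 0 then L2norm u
      else if s = 1 then Inf {L2norm g | v g. H2_0 v g \<and> (AE x in lebesgue_on {0..1}. u x = v x)}
      else sqrt (enn2real (Kint s u)))"

end

theory Submission
  imports Defs
begin

abbreviation "M01 \<equiv> lebesgue_on {0..(1::real)}"

lemma L2_measurable: "L2 f \<Longrightarrow> f \<in> borel_measurable M01"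
  by (simp add: L2_def)

lemma L2_sq_int: "L2 f \<Longrightarrow> integrable M01 (\<lambda>x. (f x)\<^sup>2)"
  by (simp add: L2_def)

lemma L2_prod_int:
  assumes "L2 f" "L2 g"
  shows "integrable M01 (\<lambda>x. f x * g x)"
proof (rule Bochner_Integration.integrable_bound[where f="\<lambda>x. (f x)\<^sup>2 + (g x)\<^sup>2"])
  show "integrable M01 (\<lambda>x. (f x)\<^sup>2 + (g x)\<^sup>2)"
    using assms by (simp add: L2_def)
  show "(\<lambda>x. f x * g x) \<in> borel_measurable M01"
    using assms by (simp add: L2_def borel_measurable_times)
  show "AE x in M01. norm (f x * g x) \<le> norm ((f x)\<^sup>2 + (g x)\<^sup>2)"
  proof (rule AE_I2)
    fix x
    have "0 \<le> (\<bar>f x\<bar> - \<bar>g x\<bar>)\<^sup>2" by simp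
    also have "\<dots> = (f x)\<^sup>2 + (g x)\<^sup>2 - 2 * (\<bar>f x\<bar> * \<bar>g x\<bar>)"
      by (simp add: power2_diff)
    finally have "\<bar>f x\<bar> * \<bar>g x\<bar> \<le> (f x)\<^sup>2 + (g x)\<^sup>2"
      using zero_le_power2[of "f x"] zero_le_power2[of "g x"] by linarith
    then show "norm (f x * g x) \<le> norm ((f x)\<^sup>2 + (g x)\<^sup>2)"
      by (simp add: abs_mult)
  qed
qed

lemma L2_add: "L2 f \<Longrightarrow> L2 g \<Longrightarrow> L2 (\<lambda>x. f x + g x)"
  unfolding L2_def
proof (intro conjI)
  assume a: "f \<in> borel_measurable M01 \<and> integrable M01 (\<lambda>x. (f x)\<^sup>2)"
     "g \<in> borel_measurable M01 \<and> integrable M01 (\<lambda>x. (g x)\<^sup>2)"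
  then show "(\<lambda>x. f x + g x) \<in> borel_measurable M01" by auto
  have "integrable M01 (\<lambda>x. f x * g x)" using a L2_prod_int unfolding L2_def by blast
  then have "integrable M01 (\<lambda>x. (f x)\<^sup>2 + 2 * (f x * g x) + (g x)\<^sup>2)"
    using a by auto
  moreover have "(\<lambda>x. (f x + g x)\<^sup>2) = (\<lambda>x. (f x)\<^sup>2 + 2 * (f x * g x) + (g x)\<^sup>2)"
    by (simp add: fun_eq_iff power2_sum)
  ultimately show "integrable M01 (\<lambda>x. (f x + g x)\<^sup>2)"
    by simp
qed

lemma L2_cmult: "L2 f \<Longrightarrow> L2 (\<lambda>x. c * f x)"
  unfolding L2_def by (auto simp: power_mult_distrib)

lemma L2_minus: "L2 f \<Longrightarrow> L2 (\<lambda>x. - f x)"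
  using L2_cmult[of f "-1"] by simp

lemma L2_diff: "L2 f \<Longrightarrow> L2 g \<Longrightarrow> L2 (\<lambda>x. f x - g x)"
  using L2_add[of f "\<lambda>x. - g x"] L2_minus[of g] by simp

lemma L2_zero: "L2 (\<lambda>x. 0)"
  unfolding L2_def by simp

lemma L2_cont: "continuous_on {0..1} f \<Longrightarrow> L2 f"
  unfolding L2_def
proof
  assume c: "continuous_on {0..1} f"
  then show "f \<in> borel_measurable M01"
    using borel_measurable_integrable continuous_imp_integrable_real by blast
  have "continuous_on {0..1} (\<lambda>x. (f x)\<^sup>2)"
    using c by (intro continuous_intros)
  then show "integrable M01 (\<lambda>x. (f x)\<^sup>2)"
    using continuous_imp_integrable_real by blast
qed

lemma L2norm_nonneg: "L2norm f \<ge> 0"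
  by (simp add: L2norm_def)

lemma L2norm_sq: "(L2norm f)\<^sup>2 = integral\<^sup>L M01 (\<lambda>x. (f x)\<^sup>2)"
  unfolding L2norm_def
  by (simp add: integral_nonneg_AE)

lemma sqint_nonneg: fixes f :: "real \<Rightarrow> real" shows "integral\<^sup>L M01 (\<lambda>x. (f x)\<^sup>2) \<ge> 0"
  by (rule integral_nonneg_AE, rule AE_I2, simp)

lemma L2norm_le_from_sq:
  assumes "integral\<^sup>L M01 (\<lambda>x. (f x)\<^sup>2) \<le> B\<^sup>2" "B \<ge> 0"
  shows "L2norm f \<le> B"
  unfolding L2norm_def using assms real_sqrt_le_mono by fastforce

lemma L2_abs_int:
  assumes "L2 f"
  shows "integrable M01 f"
  using L2_prod_int[OF assms L2_cont[of "\<lambda>x. 1"]] by simp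

lemma integrable_M01_sub:
  fixes f :: "real \<Rightarrow> real"
  assumes "integrable M01 f" "0 \<le> a" "b \<le> 1"
  shows "integrable (lebesgue_on {a..b}) f" and "f integrable_on {a..b}"
    and "integral\<^sup>L (lebesgue_on {a..b}) f = integral {a..b} f"
proof -
  have "f absolutely_integrable_on {0..1}"
    using assms(1) by (simp add: set_integrable_def integrable_restrict_space)
  then have ai: "f absolutely_integrable_on {a..b}"
    using absolutely_integrable_on_subinterval assms by fastforce
  then show i: "integrable (lebesgue_on {a..b}) f"
    by (simp add: absolutely_integrable_imp_integrable)
  show "f integrable_on {a..b}" using integrable_on_lebesgue_on[OF i] by simp
  show "integral\<^sup>L (lebesgue_on {a..b}) f = integral {a..b} f"
    by (rule lebesgue_integral_eq_integral[OF i]) simp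
qed

lemma cont_int_eq:
  fixes f :: "real \<Rightarrow> real"
  shows "continuous_on {a..b} f \<Longrightarrow> integral\<^sup>L (lebesgue_on {a..b}) f = integral {a..b} f"
  by (rule lebesgue_integral_eq_integral) (auto intro: continuous_imp_integrable_real)

lemma L2_int_on:
  assumes "L2 g" "0 \<le> a" "b \<le> 1"
  shows "g integrable_on {a..b}" "integral\<^sup>L (lebesgue_on {a..b}) g = integral {a..b} g"
  using integrable_M01_sub[OF L2_abs_int[OF assms(1)] assms(2,3)] by auto

lemma indef_cont:
  assumes "L2 g" "\<forall>x\<in>{0..1}. y1 x = y1 0 + integral {0..x} g"
  shows "continuous_on {0..1} y1"
proof -
  have "continuous_on {0..1} (\<lambda>x. y1 0 + integral {0..x} g)"
    using indefinite_integral_continuous_1[OF L2_int_on(1)[OF assms(1), of 0 1]]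
    by (intro continuous_intros) auto
  then show ?thesis
    by (rule continuous_on_eq) (use assms(2) in metis)
qed

lemma H2_0_iff:
  assumes g: "L2 g"
  shows "H2_0 y g \<longleftrightarrow> (y 0 = 0 \<and> y 1 = 0 \<and>
     (\<exists>y1. \<forall>x\<in>{0..1}. y1 x = y1 0 + integral {0..x} g \<and> y x = y 0 + integral {0..x} y1))"
    (is "?L \<longleftrightarrow> ?R")
proof -
  have eqg: "\<And>x. x \<in> {0..1} \<Longrightarrow> integral\<^sup>L (lebesgue_on {0..x}) g = integral {0..x} g"
    using L2_int_on(2)[OF g] by auto
  have key: "(\<forall>x\<in>{0..1}. y1 x = y1 0 + integral\<^sup>L (lebesgue_on {0..x}) g \<and>
        y x = y 0 + integral\<^sup>L (lebesgue_on {0..x}) y1) \<longleftrightarrow>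
      (\<forall>x\<in>{0..1}. y1 x = y1 0 + integral {0..x} g \<and> y x = y 0 + integral {0..x} y1)" for y1
  proof
    assume a: "\<forall>x\<in>{0..1}. y1 x = y1 0 + integral\<^sup>L (lebesgue_on {0..x}) g \<and>
        y x = y 0 + integral\<^sup>L (lebesgue_on {0..x}) y1"
    have a1: "\<forall>x\<in>{0..1}. y1 x = y1 0 + integral {0..x} g"
    proof
      fix x :: real assume x: "x \<in> {0..1}"
      have "y1 x = y1 0 + integral\<^sup>L (lebesgue_on {0..x}) g" using a x by blast
      then show "y1 x = y1 0 + integral {0..x} g" by (metis eqg[OF x])
    qed
    then have c: "continuous_on {0..1} y1" using indef_cont[OF g] by blast
    show "\<forall>x\<in>{0..1}. y1 x = y1 0 + integral {0..x} g \<and> y x = y 0 + integral {0..x} y1"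
    proof
      fix x :: real assume x: "x \<in> {0..1}"
      have i: "integral\<^sup>L (lebesgue_on {0..x}) y1 = integral {0..x} y1"
        by (rule cont_int_eq, rule continuous_on_subset[OF c]) (use x in auto)
      have "y x = y 0 + integral\<^sup>L (lebesgue_on {0..x}) y1" using a x by blast
      then have "y x = y 0 + integral {0..x} y1" by (metis i)
      moreover have "y1 x = y1 0 + integral {0..x} g" using a1 x by blast
      ultimately show "y1 x = y1 0 + integral {0..x} g \<and> y x = y 0 + integral {0..x} y1" by blast
    qed
  next
    assume a: "\<forall>x\<in>{0..1}. y1 x = y1 0 + integral {0..x} g \<and> y x = y 0 + integral {0..x} y1"
    then have a1: "\<forall>x\<in>{0..1}. y1 x = y1 0 + integral {0..x} g" by blast
    then have c: "continuous_on {0..1} y1" using indef_cont[OF g] by blast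
    show "\<forall>x\<in>{0..1}. y1 x = y1 0 + integral\<^sup>L (lebesgue_on {0..x}) g \<and>
        y x = y 0 + integral\<^sup>L (lebesgue_on {0..x}) y1"
    proof
      fix x :: real assume x: "x \<in> {0..1}"
      have i: "integral\<^sup>L (lebesgue_on {0..x}) y1 = integral {0..x} y1"
        by (rule cont_int_eq, rule continuous_on_subset[OF c]) (use x in auto)
      have "y x = y 0 + integral {0..x} y1" using a x by blast
      then have "y x = y 0 + integral\<^sup>L (lebesgue_on {0..x}) y1" by (metis i)
      moreover have "y1 x = y1 0 + integral\<^sup>L (lebesgue_on {0..x}) g"
        using a1 x eqg[OF x] by metis
      ultimately show "y1 x = y1 0 + integral\<^sup>L (lebesgue_on {0..x}) g \<and>
        y x = y 0 + integral\<^sup>L (lebesgue_on {0..x}) y1" by blast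
    qed
  qed
  have e: "(\<exists>y1. \<forall>x\<in>{0..1}. y1 x = y1 0 + integral\<^sup>L (lebesgue_on {0..x}) g \<and>
        y x = y 0 + integral\<^sup>L (lebesgue_on {0..x}) y1) \<longleftrightarrow>
      (\<exists>y1. \<forall>x\<in>{0..1}. y1 x = y1 0 + integral {0..x} g \<and> y x = y 0 + integral {0..x} y1)"
    by (rule ex_cong1) (rule key)
  show ?thesis by (simp only: H2_0_def e) (use g in blast)
qed

lemma H2_0_props:
  assumes "H2_0 y g"
  obtains y1 where "L2 g" "y 0 = 0" "y 1 = 0" "continuous_on {0..1} y1"
    "\<forall>x\<in>{0..1}. y1 x = y1 0 + integral {0..x} g"
    "\<forall>x\<in>{0..1}. y x = integral {0..x} y1"
proof -
  have g: "L2 g" using assms unfolding H2_0_def by blast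
  have "y 0 = 0 \<and> y 1 = 0 \<and>
     (\<exists>y1. \<forall>x\<in>{0..1}. y1 x = y1 0 + integral {0..x} g \<and> y x = y 0 + integral {0..x} y1)"
    using H2_0_iff[OF g, THEN iffD1, OF assms] .
  then obtain y1 where y1: "y 0 = 0" "y 1 = 0"
    "\<forall>x\<in>{0..1}. y1 x = y1 0 + integral {0..x} g \<and> y x = y 0 + integral {0..x} y1"
    by blast
  have a: "\<forall>x\<in>{0..1}. y1 x = y1 0 + integral {0..x} g" using y1(3) by blast
  have b: "\<forall>x\<in>{0..1}. y x = integral {0..x} y1"
  proof
    fix x :: real assume x: "x \<in> {0..1}"
    have "y x = y 0 + integral {0..x} y1" using y1(3) x by blast
    then show "y x = integral {0..x} y1" using y1(1) by simp
  qed
  have c: "continuous_on {0..1} y1" by (rule indef_cont[OF g a])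
  show ?thesis
    apply (rule that[of y1])
         apply (rule g)
        apply (rule y1(1))
       apply (rule y1(2))
      apply (rule c)
     apply (rule a)
    apply (rule b)
    done
qed

lemma H2_0_cont:
  assumes "H2_0 y g"
  shows "continuous_on {0..1} y"
proof -
  obtain y1 where y1': "L2 g" "y 0 = 0" "y 1 = 0" "continuous_on {0..1} y1"
    "\<forall>x\<in>{0..1}. y1 x = y1 0 + integral {0..x} g"
    "\<forall>x\<in>{0..1}. y x = integral {0..x} y1"
    by (rule H2_0_props[OF assms])
  note y1 = y1'(4,6)
  have "continuous_on {0..1} (\<lambda>x. integral {0..x} y1)"
    using indefinite_integral_continuous_1 integrable_continuous_real y1(1) by blast
  then show ?thesis by (rule continuous_on_eq) (use y1(2) in auto)
qed

lemma H2_0_L2: "H2_0 y g \<Longrightarrow> L2 y"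
  using H2_0_cont L2_cont by blast

lemma H2_0_L2g: "H2_0 y g \<Longrightarrow> L2 g"
  using H2_0_def by blast

lemma H2_0_diff:
  assumes a: "H2_0 a ga" and b: "H2_0 b gb"
  shows "H2_0 (\<lambda>x. a x - b x) (\<lambda>x. ga x - gb x)"
proof -
  obtain ya where ya: "L2 ga" "a 0 = 0" "a 1 = 0" "continuous_on {0..1} ya"
    "\<forall>x\<in>{0..1}. ya x = ya 0 + integral {0..x} ga"
    "\<forall>x\<in>{0..1}. a x = integral {0..x} ya"
    by (rule H2_0_props[OF a])
  obtain yb where yb: "L2 gb" "b 0 = 0" "b 1 = 0" "continuous_on {0..1} yb"
    "\<forall>x\<in>{0..1}. yb x = yb 0 + integral {0..x} gb"
    "\<forall>x\<in>{0..1}. b x = integral {0..x} yb"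
    by (rule H2_0_props[OF b])
  have g: "L2 (\<lambda>x. ga x - gb x)" using L2_diff ya(1) yb(1) by blast
  have "\<forall>x\<in>{0..1}. (ya x - yb x) = (ya 0 - yb 0) + integral {0..x} (\<lambda>x. ga x - gb x)
      \<and> a x - b x = (a 0 - b 0) + integral {0..x} (\<lambda>x. ya x - yb x)"
  proof
    fix x :: real assume x: "x \<in> {0..1}"
    have i1: "ga integrable_on {0..x}" "gb integrable_on {0..x}"
      using L2_int_on(1) ya(1) yb(1) x by auto
    have i2: "ya integrable_on {0..x}" "yb integrable_on {0..x}"
      using ya(4) yb(4) x by (auto intro!: integrable_continuous_real elim!: continuous_on_subset)
    have e1: "integral {0..x} (\<lambda>x. ga x - gb x) = integral {0..x} ga - integral {0..x} gb"
      by (rule integral_diff[OF i1])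
    have e2: "integral {0..x} (\<lambda>x. ya x - yb x) = integral {0..x} ya - integral {0..x} yb"
      by (rule integral_diff[OF i2])
    have f1: "ya x = ya 0 + integral {0..x} ga" using ya(5) x by blast
    have f2: "yb x = yb 0 + integral {0..x} gb" using yb(5) x by blast
    have f3: "a x = integral {0..x} ya" using ya(6) x by blast
    have f4: "b x = integral {0..x} yb" using yb(6) x by blast
    show "(ya x - yb x) = (ya 0 - yb 0) + integral {0..x} (\<lambda>x. ga x - gb x)
      \<and> a x - b x = (a 0 - b 0) + integral {0..x} (\<lambda>x. ya x - yb x)"
      unfolding e1 e2 f1 f2 f3 f4 using ya(2) yb(2) by simp
  qed
  then have "\<exists>y1. \<forall>x\<in>{0..1}. y1 x = y1 0 + integral {0..x} (\<lambda>x. ga x - gb x)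
      \<and> a x - b x = (a 0 - b 0) + integral {0..x} y1"
    by (rule exI[where x="\<lambda>x. ya x - yb x"])
  moreover have "a 0 - b 0 = 0" "a 1 - b 1 = 0" using ya(2,3) yb(2,3) by simp_all
  ultimately show ?thesis unfolding H2_0_iff[OF g] by blast
qed

lemma cell_exists:
  assumes N: "N \<ge> 1" and x: "0 \<le> x" "x \<le> 1"
  shows "\<exists>k<N. real k / real N \<le> x \<and> x \<le> real (Suc k) / real N"
proof (cases "x = 1")
  case True
  then show ?thesis using N
    by (intro exI[of _ "N - 1"]) (auto simp: of_nat_diff)
next
  case False
  define k where "k = nat \<lfloor>x * real N\<rfloor>"
  have Np: "real N > 0" using N by simp
  have xN: "0 \<le> x * real N" using x Np by simp
  have k1: "real k \<le> x * real N" unfolding k_def using xN by linarith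
  have k2: "x * real N < real k + 1" unfolding k_def using xN by linarith
  have x1: "x < 1" using False x by simp
  have "x * real N < 1 * real N" by (rule mult_strict_right_mono[OF x1 Np])
  then have "real k < real N" using k1 by linarith
  then have "k < N" by simp
  moreover have "real k / real N \<le> x" using k1 Np by (simp add: divide_le_eq)
  moreover have "x \<le> real (Suc k) / real N" using k2 Np by (simp add: le_divide_eq)
  ultimately show ?thesis by blast
qed

definition nodes :: "nat \<Rightarrow> real set" where
  "nodes N = (\<lambda>k. real k / real N) ` {..N}"

lemma finite_nodes: "finite (nodes N)"
  unfolding nodes_def by simp

lemma cell_open:
  assumes N: "N \<ge> 1" and x: "0 \<le> x" "x \<le> 1" "x \<notin> nodes N"
  shows "\<exists>k<N. real k / real N < x \<and> x < real (Suc k) / real N"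
proof -
  obtain k where k: "k < N" "real k / real N \<le> x" "x \<le> real (Suc k) / real N"
    using cell_exists[OF N x(1,2)] by blast
  have "x \<noteq> real k / real N" "x \<noteq> real (Suc k) / real N"
    using x(3) k(1) unfolding nodes_def by (auto simp del: of_nat_Suc)
  then show ?thesis using k by (intro exI[of _ k]) auto
qed

lemma sum_cells:
  fixes f :: "real \<Rightarrow> real"
  assumes N: "N \<ge> 1" and f: "f integrable_on {0..1}"
  shows "integral {0..1} f = (\<Sum>k<N. integral {real k / real N .. real (Suc k) / real N} f)"
proof -
  have Np: "real N > 0" using N by simp
  have "m \<le> N \<Longrightarrow> integral {0..real m / real N} f
      = (\<Sum>k<m. integral {real k / real N .. real (Suc k) / real N} f)" for m
  proof (induction m)
    case 0
    then show ?case by simp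
  next
    case (Suc m)
    have le1: "real (Suc m) / real N \<le> 1" using Suc.prems Np by (simp add: divide_le_eq)
    have le0: "0 \<le> real m / real N" by simp
    have le2: "real m / real N \<le> real (Suc m) / real N" using Np by (simp add: divide_right_mono)
    have fi: "f integrable_on {0..real (Suc m) / real N}"
      using integrable_on_subinterval[OF f] le1 by auto
    have "integral {0..real (Suc m) / real N} f = integral {0..real m / real N} f
        + integral {real m / real N..real (Suc m) / real N} f"
      using Henstock_Kurzweil_Integration.integral_combine[OF le0 le2 fi] by simp
    then show ?case using Suc by simp
  qed
  from this[of N] show ?thesis using Np by simp
qed

definition stepf :: "nat \<Rightarrow> (nat \<Rightarrow> real) \<Rightarrow> real \<Rightarrow> real" where
  "stepf N c x = (\<Sum>k<N. c k * indicator {real k / real N ..< real (Suc k) / real N} x)"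

lemma stepf_open:
  assumes N: "N \<ge> 1" and k: "k < N" and x: "real k / real N < x" "x < real (Suc k) / real N"
  shows "stepf N c x = c k"
proof -
  have Np: "real N > 0" using N by simp
  have "c j * indicator {real j / real N ..< real (Suc j) / real N} x = (if j = k then c k else 0)"
    for j
  proof (cases "j = k")
    case True
    then show ?thesis using x by (simp add: indicator_def)
  next
    case False
    have "x \<notin> {real j / real N ..< real (Suc j) / real N}"
    proof
      assume "x \<in> {real j / real N ..< real (Suc j) / real N}"
      then have a: "real j / real N \<le> x" "x < real (Suc j) / real N" by auto
      have "real j / real N < real (Suc k) / real N" using a x by linarith
      then have "real j < real (Suc k)" using Np by (simp add: divide_less_cancel)
      moreover have "real k / real N < real (Suc j) / real N" using a x by linarith
      then have "real k < real (Suc j)" using Np by (simp add: divide_less_cancel)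
      ultimately show False using False by linarith
    qed
    then show ?thesis using False by simp
  qed
  then have "stepf N c x = (\<Sum>j<N. if j = k then c k else 0)"
    unfolding stepf_def by (intro sum.cong) auto
  also have "\<dots> = c k" using k by simp
  finally show ?thesis .
qed

lemma stepf_measurable: "stepf N c \<in> borel_measurable M01"
proof -
  have "(\<lambda>x. c k * indicator {real k / real N ..< real (Suc k) / real N} x) \<in> borel_measurable M01" for k
  proof -
    have "{real k / real N ..< real (Suc k) / real N} \<in> sets lebesgue" by simp
    then have "indicat_real {real k / real N ..< real (Suc k) / real N} \<in> borel_measurable lebesgue"
      by (rule borel_measurable_indicator)
    then have "indicat_real {real k / real N ..< real (Suc k) / real N} \<in> borel_measurable M01"
      by (rule measurable_restrict_space1)
    then show ?thesis by (intro borel_measurable_times) auto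
  qed
  then show ?thesis unfolding stepf_def by (intro borel_measurable_sum) auto
qed

lemma stepf_bound: "\<bar>stepf N c x\<bar> \<le> (\<Sum>k<N. \<bar>c k\<bar>)"
  unfolding stepf_def
  by (rule order_trans[OF sum_abs]) (intro sum_mono, simp add: abs_mult indicator_def)

lemma stepf_L2: "L2 (stepf N c)"
  unfolding L2_def
proof
  show m: "stepf N c \<in> borel_measurable M01" by (rule stepf_measurable)
  have fm: "finite_measure M01" by (rule finite_measure_lebesgue_on) simp
  show "integrable M01 (\<lambda>x. (stepf N c x)\<^sup>2)"
  proof (rule finite_measure.integrable_const_bound[OF fm])
    show "(\<lambda>x. (stepf N c x)\<^sup>2) \<in> borel_measurable M01" using m by measurable
    show "AE x in M01. norm ((stepf N c x)\<^sup>2) \<le> (\<Sum>k<N. \<bar>c k\<bar>)\<^sup>2"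
    proof (rule AE_I2)
      fix x
      have b: "\<bar>stepf N c x\<bar> \<le> (\<Sum>k<N. \<bar>c k\<bar>)" by (rule stepf_bound)
      have nn: "(\<Sum>k<N. \<bar>c k\<bar>) \<ge> 0" by (simp add: sum_nonneg)
      have "(stepf N c x)\<^sup>2 \<le> (\<Sum>k<N. \<bar>c k\<bar>)\<^sup>2"
        using b nn by (metis abs_le_square_iff abs_of_nonneg)
      then show "norm ((stepf N c x)\<^sup>2) \<le> (\<Sum>k<N. \<bar>c k\<bar>)\<^sup>2" by simp
    qed
  qed
qed

lemma spline_cont:
  assumes "y \<in> spline_space N"
  shows "continuous_on {0..1} y"
proof -
  obtain y' where d: "\<forall>x\<in>{0..1}. (y has_real_derivative y' x) (at x within {0..1})"
    using assms unfolding spline_space_def by blast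
  show ?thesis
    using d by (metis DERIV_continuous continuous_at_imp_continuous_on continuous_on_eq_continuous_within)
qed

lemma spline_diff:
  assumes a: "a \<in> spline_space N" and b: "b \<in> spline_space N"
  shows "(\<lambda>x. a x - b x) \<in> spline_space N"
proof -
  obtain a' where a': "continuous_on {0..1} a'" "\<forall>x\<in>{0..1}. (a has_real_derivative a' x) (at x within {0..1})"
    using a unfolding spline_space_def by blast
  obtain b' where b': "continuous_on {0..1} b'" "\<forall>x\<in>{0..1}. (b has_real_derivative b' x) (at x within {0..1})"
    using b unfolding spline_space_def by blast
  have c: "continuous_on {0..1} (\<lambda>x. a' x - b' x)" using a'(1) b'(1) by (intro continuous_intros)
  have d: "\<forall>x\<in>{0..1}. ((\<lambda>x. a x - b x) has_real_derivative (a' x - b' x)) (at x within {0..1})"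
    using a'(2) b'(2) by (auto intro: derivative_intros)
  have p: "\<exists>aa bb cc. \<forall>x\<in>{real k / real N..real (Suc k) / real N}. a x - b x = aa + bb * x + cc * x\<^sup>2"
    if kN: "k < N" for k
  proof -
    obtain a1 b1 c1 where 1: "\<forall>x\<in>{real k / real N..real (Suc k) / real N}. a x = a1 + b1 * x + c1 * x\<^sup>2"
      using a kN unfolding spline_space_def by blast
    obtain a2 b2 c2 where 2: "\<forall>x\<in>{real k / real N..real (Suc k) / real N}. b x = a2 + b2 * x + c2 * x\<^sup>2"
      using b kN unfolding spline_space_def by blast
    show ?thesis using 1 2
      by (intro exI[of _ "a1 - a2"] exI[of _ "b1 - b2"] exI[of _ "c1 - c2"]) (auto simp: algebra_simps)
  qed
  show ?thesis using a b c d p unfolding spline_space_def by auto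
qed

lemma spline_H2:
  assumes N: "N \<ge> 1" and y: "y \<in> spline_space N"
  shows "\<exists>g. H2_0 y g"
proof -
  obtain y' where y0: "y 0 = 0" "y 1 = 0" and c: "continuous_on {0..1} y'"
    and d: "\<forall>x\<in>{0..1}. (y has_real_derivative y' x) (at x within {0..1})"
    and p: "\<forall>k<N. \<exists>a b c. \<forall>x\<in>{real k / real N..real (Suc k) / real N}. y x = a + b * x + c * x\<^sup>2"
    using y unfolding spline_space_def by blast
  obtain A B C where ABC: "\<forall>k<N. \<forall>x\<in>{real k / real N..real (Suc k) / real N}. y x = A k + B k * x + C k * x\<^sup>2"
    using p by metis
  define g where "g = stepf N (\<lambda>k. 2 * C k)"
  have gL2: "L2 g" unfolding g_def by (rule stepf_L2)
  have Np: "real N > 0" using N by simp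
  have der: "(y' has_real_derivative g t) (at t)"
    if k: "k < N" and t: "real k / real N < t" "t < real (Suc k) / real N" for k t
  proof -
    define U where "U = {real k / real N <..< real (Suc k) / real N}"
    have oU: "open U" unfolding U_def by simp
    have U01: "U \<subseteq> {0<..<1}"
    proof
      fix s assume "s \<in> U"
      then have s: "real k / real N < s" "s < real (Suc k) / real N" unfolding U_def by auto
      have a1: "0 \<le> real k / real N" by simp
      have a2: "real (Suc k) / real N \<le> 1" using k Np by (simp add: divide_le_eq)
      have "0 < s" "s < 1" using a1 a2 s by linarith+
      then show "s \<in> {0<..<1}" by simp
    qed
    have yq: "\<forall>s\<in>U. A k + B k * s + C k * s\<^sup>2 = y s"
      using ABC k unfolding U_def by auto
    have y'eq: "y' s = B k + 2 * C k * s" if s: "s \<in> U" for s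
    proof -
      have "((\<lambda>s. A k + B k * s + C k * s\<^sup>2) has_real_derivative (B k + 2 * C k * s)) (at s)"
        by (auto intro!: derivative_eq_intros)
      then have 1: "(y has_real_derivative (B k + 2 * C k * s)) (at s)"
        by (rule has_field_derivative_transform_within_open[OF _ oU s]) (use yq in auto)
      have si: "s \<in> interior {0..1}" using U01 s by auto
      have "(y has_real_derivative y' s) (at s within {0..1})" using d U01 s by auto
      then have 2: "(y has_real_derivative y' s) (at s)"
        using at_within_interior[OF si] by simp
      show ?thesis using DERIV_unique[OF 2 1] .
    qed
    have tU: "t \<in> U" using t unfolding U_def by auto
    have "((\<lambda>s. B k + 2 * C k * s) has_real_derivative 2 * C k) (at t)"
      by (auto intro!: derivative_eq_intros)
    then have "(y' has_real_derivative 2 * C k) (at t)"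
      by (rule has_field_derivative_transform_within_open[OF _ oU tU]) (use y'eq in auto)
    moreover have "g t = 2 * C k" unfolding g_def using stepf_open[OF N k t] by simp
    ultimately show ?thesis by simp
  qed
  have "\<forall>x\<in>{0..1}. y' x = y' 0 + integral {0..x} g \<and> y x = y 0 + integral {0..x} y'"
  proof
    fix x :: real assume x: "x \<in> {0..1}"
    have "(g has_integral y' x - y' 0) {0..x}"
    proof (rule fundamental_theorem_of_calculus_strong[OF finite_nodes[of N]])
      show "0 \<le> x" using x by simp
      show "continuous_on {0..x} y'" using c x by (auto elim: continuous_on_subset)
      fix t assume t: "t \<in> {0..x} - nodes N"
      then obtain k where k: "k < N" "real k / real N < t" "t < real (Suc k) / real N"
        using cell_open[OF N, of t] x by auto
      show "(y' has_vector_derivative g t) (at t)"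
        using der[OF k] by (simp add: has_real_derivative_iff_has_vector_derivative)
    qed
    then have 1: "y' x = y' 0 + integral {0..x} g" by (simp add: integral_unique)
    have "(y' has_integral y x - y 0) {0..x}"
    proof (rule fundamental_theorem_of_calculus)
      show "0 \<le> x" using x by simp
      fix t assume t: "t \<in> {0..x}"
      have "(y has_real_derivative y' t) (at t within {0..1})" using d t x by auto
      then have "(y has_real_derivative y' t) (at t within {0..x})"
        by (rule DERIV_subset) (use x in auto)
      then show "(y has_vector_derivative y' t) (at t within {0..x})"
        by (simp add: has_real_derivative_iff_has_vector_derivative)
    qed
    then have 2: "y x = y 0 + integral {0..x} y'" by (simp add: integral_unique)
    show "y' x = y' 0 + integral {0..x} g \<and> y x = y 0 + integral {0..x} y'" using 1 2 by simp
  qed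
  then have "H2_0 y g" unfolding H2_0_iff[OF gL2] using y0 by blast
  then show ?thesis by blast
qed

lemma sq_expand:
  assumes p: "L2 p" and q: "L2 q"
  shows "integral\<^sup>L M01 (\<lambda>x. (p x + q x)\<^sup>2) = integral\<^sup>L M01 (\<lambda>x. (p x)\<^sup>2)
     + 2 * integral\<^sup>L M01 (\<lambda>x. p x * q x) + integral\<^sup>L M01 (\<lambda>x. (q x)\<^sup>2)"
proof -
  have i1: "integrable M01 (\<lambda>x. (p x)\<^sup>2)" using p by (rule L2_sq_int)
  have i3: "integrable M01 (\<lambda>x. (q x)\<^sup>2)" using q by (rule L2_sq_int)
  have i2': "integrable M01 (\<lambda>x. p x * q x)" using L2_prod_int[OF p q] .
  have i2: "integrable M01 (\<lambda>x. 2 * (p x * q x))" using i2' by simp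
  have i12: "integrable M01 (\<lambda>x. (p x)\<^sup>2 + 2 * (p x * q x))" using i1 i2 by simp
  have "integral\<^sup>L M01 (\<lambda>x. (p x + q x)\<^sup>2) = integral\<^sup>L M01 (\<lambda>x. ((p x)\<^sup>2 + 2 * (p x * q x)) + (q x)\<^sup>2)"
    by (rule Bochner_Integration.integral_cong[OF refl]) (simp add: power2_sum algebra_simps)
  also have "\<dots> = integral\<^sup>L M01 (\<lambda>x. (p x)\<^sup>2 + 2 * (p x * q x)) + integral\<^sup>L M01 (\<lambda>x. (q x)\<^sup>2)"
    by (rule Bochner_Integration.integral_add[OF i12 i3])
  also have "integral\<^sup>L M01 (\<lambda>x. (p x)\<^sup>2 + 2 * (p x * q x)) = integral\<^sup>L M01 (\<lambda>x. (p x)\<^sup>2) + integral\<^sup>L M01 (\<lambda>x. 2 * (p x * q x))"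
    by (rule Bochner_Integration.integral_add[OF i1 i2])
  also have "integral\<^sup>L M01 (\<lambda>x. 2 * (p x * q x)) = 2 * integral\<^sup>L M01 (\<lambda>x. p x * q x)"
    by simp
  finally show ?thesis by simp
qed

lemma min_prop:
  assumes N: "N \<ge> 1" and u: "L2 u" and ds: "discrete_sol N \<rho> u yr" and rho: "\<rho> \<ge> 0"
    and z: "z \<in> spline_space N" and gz: "H2_0 z gz"
  shows "integral\<^sup>L M01 (\<lambda>x. (yr x - u x)\<^sup>2) \<le> integral\<^sup>L M01 (\<lambda>x. (z x - u x)\<^sup>2)
           + \<rho> * integral\<^sup>L M01 (\<lambda>x. (gz x)\<^sup>2)"
proof -
  have yr: "yr \<in> spline_space N" using ds unfolding discrete_sol_def by blast
  obtain gr where gr: "H2_0 yr gr" using spline_H2[OF N yr] by blast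
  define w where "w = (\<lambda>x. z x - yr x)"
  define gw where "gw = (\<lambda>x. gz x - gr x)"
  have wsp: "w \<in> spline_space N" unfolding w_def by (rule spline_diff[OF z yr])
  have hw: "H2_0 w gw" unfolding w_def gw_def by (rule H2_0_diff[OF gz gr])
  have orth: "integral\<^sup>L M01 (\<lambda>x. yr x * w x) + \<rho> * integral\<^sup>L M01 (\<lambda>x. gr x * gw x)
      = integral\<^sup>L M01 (\<lambda>x. u x * w x)"
    using ds wsp gr hw unfolding discrete_sol_def by blast
  have Lyr: "L2 yr" using gr by (rule H2_0_L2)
  have Lw: "L2 w" using hw by (rule H2_0_L2)
  have Lgr: "L2 gr" using gr by (rule H2_0_L2g)
  have Lgw: "L2 gw" using hw by (rule H2_0_L2g)
  define a where "a = (\<lambda>x. yr x - u x)"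
  have La: "L2 a" unfolding a_def using L2_diff[OF Lyr u] .
  have e1: "integral\<^sup>L M01 (\<lambda>x. (z x - u x)\<^sup>2) = integral\<^sup>L M01 (\<lambda>x. (a x + w x)\<^sup>2)"
    unfolding a_def w_def by (rule Bochner_Integration.integral_cong[OF refl]) (simp add: algebra_simps)
  have e2: "integral\<^sup>L M01 (\<lambda>x. (a x + w x)\<^sup>2) = integral\<^sup>L M01 (\<lambda>x. (a x)\<^sup>2)
     + 2 * integral\<^sup>L M01 (\<lambda>x. a x * w x) + integral\<^sup>L M01 (\<lambda>x. (w x)\<^sup>2)"
    by (rule sq_expand[OF La Lw])
  have e3: "integral\<^sup>L M01 (\<lambda>x. a x * w x) = integral\<^sup>L M01 (\<lambda>x. yr x * w x) - integral\<^sup>L M01 (\<lambda>x. u x * w x)"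
  proof -
    have "integral\<^sup>L M01 (\<lambda>x. a x * w x) = integral\<^sup>L M01 (\<lambda>x. yr x * w x - u x * w x)"
      unfolding a_def by (rule Bochner_Integration.integral_cong[OF refl]) (simp add: algebra_simps)
    also have "\<dots> = integral\<^sup>L M01 (\<lambda>x. yr x * w x) - integral\<^sup>L M01 (\<lambda>x. u x * w x)"
      by (rule Bochner_Integration.integral_diff[OF L2_prod_int[OF Lyr Lw] L2_prod_int[OF u Lw]])
    finally show ?thesis .
  qed
  have e4: "integral\<^sup>L M01 (\<lambda>x. (gz x)\<^sup>2) = integral\<^sup>L M01 (\<lambda>x. (gr x + gw x)\<^sup>2)"
    unfolding gw_def by (rule Bochner_Integration.integral_cong[OF refl]) simp
  have e5: "integral\<^sup>L M01 (\<lambda>x. (gr x + gw x)\<^sup>2) = integral\<^sup>L M01 (\<lambda>x. (gr x)\<^sup>2)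
     + 2 * integral\<^sup>L M01 (\<lambda>x. gr x * gw x) + integral\<^sup>L M01 (\<lambda>x. (gw x)\<^sup>2)"
    by (rule sq_expand[OF Lgr Lgw])
  have e6: "\<rho> * integral\<^sup>L M01 (\<lambda>x. (gz x)\<^sup>2) = \<rho> * integral\<^sup>L M01 (\<lambda>x. (gr x)\<^sup>2)
     + 2 * (\<rho> * integral\<^sup>L M01 (\<lambda>x. gr x * gw x)) + \<rho> * integral\<^sup>L M01 (\<lambda>x. (gw x)\<^sup>2)"
    unfolding e4 e5 by (simp add: algebra_simps)
  have n1: "\<rho> * integral\<^sup>L M01 (\<lambda>x. (gr x)\<^sup>2) \<ge> 0" using rho sqint_nonneg by simp
  have n2: "\<rho> * integral\<^sup>L M01 (\<lambda>x. (gw x)\<^sup>2) \<ge> 0" using rho sqint_nonneg by simp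
  have n3: "integral\<^sup>L M01 (\<lambda>x. (w x)\<^sup>2) \<ge> 0" using sqint_nonneg by simp
  have "integral\<^sup>L M01 (\<lambda>x. (yr x - u x)\<^sup>2) = integral\<^sup>L M01 (\<lambda>x. (a x)\<^sup>2)" unfolding a_def by simp
  then show ?thesis using e1 e2 e3 e6 n1 n2 n3 orth by linarith
qed

lemma cs_interval:
  fixes f :: "real \<Rightarrow> real"
  assumes ab: "a \<le> b" and i1: "(\<lambda>x. \<bar>f x\<bar>) integrable_on {a..b}"
    and i2: "(\<lambda>x. (f x)\<^sup>2) integrable_on {a..b}"
  shows "(integral {a..b} (\<lambda>x. \<bar>f x\<bar>))\<^sup>2 \<le> (b - a) * integral {a..b} (\<lambda>x. (f x)\<^sup>2)"
proof (cases "a = b")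
  case True
  then show ?thesis by simp
next
  case False
  then have h: "b - a > 0" using ab by simp
  define G where "G = integral {a..b} (\<lambda>x. \<bar>f x\<bar>)"
  define C where "C = integral {a..b} (\<lambda>x. (f x)\<^sup>2)"
  define m where "m = G / (b - a)"
  have i3: "(\<lambda>x. 2 * m * \<bar>f x\<bar>) integrable_on {a..b}"
    using integrable_on_cmult_left[OF i1, of "2 * m"] by simp
  have i4: "(\<lambda>x. (f x)\<^sup>2 - 2 * m * \<bar>f x\<bar>) integrable_on {a..b}"
    by (rule integrable_diff[OF i2 i3])
  have i5: "(\<lambda>x. m\<^sup>2) integrable_on {a..b}" by (rule integrable_const_ivl)
  have i6: "(\<lambda>x. ((f x)\<^sup>2 - 2 * m * \<bar>f x\<bar>) + m\<^sup>2) integrable_on {a..b}"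
    by (rule integrable_add[OF i4 i5])
  have "0 \<le> integral {a..b} (\<lambda>x. ((f x)\<^sup>2 - 2 * m * \<bar>f x\<bar>) + m\<^sup>2)"
  proof (rule integral_nonneg[OF i6])
    fix x
    have "((f x)\<^sup>2 - 2 * m * \<bar>f x\<bar>) + m\<^sup>2 = (\<bar>f x\<bar> - m)\<^sup>2"
      by (simp add: power2_diff)
    then show "0 \<le> ((f x)\<^sup>2 - 2 * m * \<bar>f x\<bar>) + m\<^sup>2" by simp
  qed
  also have "integral {a..b} (\<lambda>x. ((f x)\<^sup>2 - 2 * m * \<bar>f x\<bar>) + m\<^sup>2)
      = integral {a..b} (\<lambda>x. (f x)\<^sup>2 - 2 * m * \<bar>f x\<bar>) + integral {a..b} (\<lambda>x. m\<^sup>2)"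
    by (rule integral_add[OF i4 i5])
  also have "integral {a..b} (\<lambda>x. (f x)\<^sup>2 - 2 * m * \<bar>f x\<bar>)
      = C - integral {a..b} (\<lambda>x. 2 * m * \<bar>f x\<bar>)"
    unfolding C_def by (rule integral_diff[OF i2 i3])
  also have "integral {a..b} (\<lambda>x. 2 * m * \<bar>f x\<bar>) = 2 * m * G"
    unfolding G_def by (simp add: integral_mult_right)
  also have "integral {a..b} (\<lambda>x. m\<^sup>2) = (b - a) * m\<^sup>2"
    using ab by simp
  finally have "0 \<le> C - 2 * m * G + (b - a) * m\<^sup>2" .
  moreover have "2 * m * G = 2 * G\<^sup>2 / (b - a)" unfolding m_def by (simp add: power2_eq_square)
  moreover have "(b - a) * m\<^sup>2 = G\<^sup>2 / (b - a)" unfolding m_def using h by (simp add: power2_eq_square)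
  ultimately have "G\<^sup>2 / (b - a) \<le> C" by simp
  then have "G\<^sup>2 \<le> C * (b - a)" using h by (simp add: divide_le_eq)
  then show ?thesis unfolding G_def C_def by (simp add: mult.commute)
qed

lemma sum_shift_down:
  fixes f :: "nat \<Rightarrow> real"
  assumes N: "N \<ge> 1" and nn: "\<And>k. k < N \<Longrightarrow> f k \<ge> 0"
  shows "(\<Sum>k<N. f (k - 1)) \<le> 2 * (\<Sum>k<N. f k)"
proof -
  obtain n where n: "N = Suc n" using N by (cases N) auto
  have "(\<Sum>k<Suc n. f (k - 1)) = f 0 + (\<Sum>k<n. f k)"
    by (subst sum.lessThan_Suc_shift) simp
  also have "(\<Sum>k<n. f k) \<le> (\<Sum>k<Suc n. f k)"
    using nn n by simp
  also have "f 0 \<le> (\<Sum>k<Suc n. f k)"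
    using nn n by (intro member_le_sum) auto
  finally show ?thesis using n by simp
qed

lemma sum_shift_up:
  fixes f :: "nat \<Rightarrow> real"
  assumes N: "N \<ge> 1" and nn: "\<And>k. k < N \<Longrightarrow> f k \<ge> 0"
  shows "(\<Sum>k<N. f (min (Suc k) (N - 1))) \<le> 2 * (\<Sum>k<N. f k)"
proof -
  obtain n where n: "N = Suc n" using N by (cases N) auto
  have "(\<Sum>k<Suc n. f (min (Suc k) n)) = (\<Sum>k<n. f (min (Suc k) n)) + f n"
    by simp
  also have "(\<Sum>k<n. f (min (Suc k) n)) = (\<Sum>k<n. f (Suc k))"
    by (intro sum.cong) auto
  also have "(\<Sum>k<n. f (Suc k)) \<le> (\<Sum>k<Suc n. f k)"
    using nn n by (subst sum.lessThan_Suc_shift) simp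
  also have "f n \<le> (\<Sum>k<Suc n. f k)"
    using nn n by (intro member_le_sum) auto
  finally show ?thesis using n by simp
qed

locale apx =
  fixes N :: nat and g y1 :: "real \<Rightarrow> real"
  assumes N: "N \<ge> 1" and gL2: "L2 g"
    and y1c: "\<forall>x\<in>{0..1}. y1 x = y1 0 + integral {0..x} g"
    and V1: "integral {0..1} y1 = 0"
begin

definition xk :: "nat \<Rightarrow> real" where "xk k = real k / real N"
definition VV where "VV x = integral {0..x} y1"
definition DD where "DD k = (VV (xk (Suc k)) - VV (xk k)) * real N"
definition Dc where "Dc k = DD (min k (N - 1))"
definition PP where "PP k = (Dc (k - 1) + Dc k) / 2"
definition ZZ where "ZZ k = VV (xk k) + (Dc k - Dc (k - 1)) / (4 * real N)"
definition sig where "sig k = (PP (Suc k) - PP k) * real N"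
definition hat where "hat k x = max 0 (1 - \<bar>x * real N - real k\<bar>)"
definition zp where "zp x = (\<Sum>k\<le>N. PP k * hat k x)"
definition zf where "zf x = integral {0..x} zp"
definition gzz where "gzz = stepf N sig"
definition GG where "GG k = integral {xk k..xk (Suc k)} (\<lambda>t. \<bar>g t\<bar>)"
definition Cg where "Cg k = integral {xk k..xk (Suc k)} (\<lambda>t. (g t)\<^sup>2)"
definition Gs where "Gs k = GG (k - 1) + GG k + GG (min (Suc k) (N - 1))"
definition Fk where "Fk k s = PP k * (s - xk k) + (PP (Suc k) - PP k) * real N / 2 * (s - xk k)\<^sup>2"

lemma Np: "real N > 0" using N by simp

lemma xk_0[simp]: "xk 0 = 0" by (simp add: xk_def)
lemma xk_N[simp]: "xk N = 1" using Np by (simp add: xk_def)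
lemma xk_nonneg: "0 \<le> xk k" by (simp add: xk_def)
lemma xk_le1: "k \<le> N \<Longrightarrow> xk k \<le> 1" using Np by (simp add: xk_def divide_le_eq)
lemma xk_mono: "j \<le> k \<Longrightarrow> xk j \<le> xk k" using Np by (simp add: xk_def divide_right_mono)
lemma xk_Suc: "xk (Suc k) = xk k + 1 / real N" by (simp add: xk_def add_divide_distrib)
lemma xk_Suc_le: "xk k \<le> xk (Suc k)" by (rule xk_mono) simp
lemma cell_sub: "k < N \<Longrightarrow> {xk k..xk (Suc k)} \<subseteq> {0..1}"
  using xk_nonneg[of k] xk_le1[of "Suc k"] by auto

lemma absg_int: "0 \<le> a \<Longrightarrow> b \<le> 1 \<Longrightarrow> (\<lambda>t. \<bar>g t\<bar>) integrable_on {a..b}"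
  using integrable_M01_sub(2)[OF integrable_abs[OF L2_abs_int[OF gL2]]] by blast
lemma g_int: "0 \<le> a \<Longrightarrow> b \<le> 1 \<Longrightarrow> g integrable_on {a..b}"
  using integrable_M01_sub(2)[OF L2_abs_int[OF gL2]] by blast
lemma g2_int: "0 \<le> a \<Longrightarrow> b \<le> 1 \<Longrightarrow> (\<lambda>t. (g t)\<^sup>2) integrable_on {a..b}"
  using integrable_M01_sub(2)[OF L2_sq_int[OF gL2]] by blast
lemma y1_cont: "continuous_on {0..1} y1" by (rule indef_cont[OF gL2 y1c])
lemma y1_int: "0 \<le> a \<Longrightarrow> b \<le> 1 \<Longrightarrow> y1 integrable_on {a..b}"
  by (rule integrable_continuous_real, rule continuous_on_subset[OF y1_cont]) auto

lemma y1_at: "x \<in> {0..1} \<Longrightarrow> y1 x = y1 0 + integral {0..x} g"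
  by (rule bspec[OF y1c])

lemma y1_diff:
  assumes "0 \<le> s" "s \<le> t" "t \<le> 1"
  shows "y1 t - y1 s = integral {s..t} g"
proof -
  have 1: "y1 t = y1 0 + integral {0..t} g" by (rule y1_at) (use assms in auto)
  have 2: "y1 s = y1 0 + integral {0..s} g" by (rule y1_at) (use assms in auto)
  have gi: "g integrable_on {0..t}" by (rule g_int) (use assms in auto)
  have 3: "integral {0..t} g = integral {0..s} g + integral {s..t} g"
    by (rule Henstock_Kurzweil_Integration.integral_combine[OF assms(1,2) gi, symmetric])
  show ?thesis using 1 2 3 by linarith
qed

lemma y1_bound:
  assumes ab: "0 \<le> a" "b \<le> 1" and st: "s \<in> {a..b}" "t \<in> {a..b}"
  shows "\<bar>y1 t - y1 s\<bar> \<le> integral {a..b} (\<lambda>x. \<bar>g x\<bar>)"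
proof -
  have main: "\<bar>y1 t' - y1 s'\<bar> \<le> integral {a..b} (\<lambda>x. \<bar>g x\<bar>)"
    if st': "a \<le> s'" "s' \<le> t'" "t' \<le> b" for s' t'
  proof -
    have "\<bar>y1 t' - y1 s'\<bar> = \<bar>integral {s'..t'} g\<bar>"
      using y1_diff[of s' t'] st' ab by simp
    also have "\<dots> \<le> integral {s'..t'} (\<lambda>x. \<bar>g x\<bar>)"
    proof -
      have "norm (integral {s'..t'} g) \<le> integral {s'..t'} (\<lambda>x. \<bar>g x\<bar>)"
        by (rule integral_norm_bound_integral) (use g_int absg_int st' ab in auto)
      then show ?thesis by simp
    qed
    also have "\<dots> \<le> integral {a..b} (\<lambda>x. \<bar>g x\<bar>)"
      by (rule integral_subset_le) (use absg_int st' ab in auto)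
    finally show ?thesis .
  qed
  show ?thesis
  proof (cases "s \<le> t")
    case True
    then show ?thesis using main[of s t] st by auto
  next
    case False
    then show ?thesis using main[of t s] st by (auto simp: abs_minus_commute)
  qed
qed

lemma VV_deriv: "x \<in> {0..1} \<Longrightarrow> (VV has_real_derivative y1 x) (at x within {0..1})"
proof -
  assume x: "x \<in> {0..1}"
  have "VV = (\<lambda>x. integral {0..x} y1)" by (rule ext) (simp add: VV_def)
  then show ?thesis using integral_has_real_derivative[OF y1_cont x] by simp
qed

lemma DD_mvt:
  assumes k: "k < N"
  shows "\<exists>\<xi>\<in>{xk k..xk (Suc k)}. DD k = y1 \<xi>"
proof -
  have "\<exists>\<xi>\<in>{xk k..xk (Suc k)}. VV (xk (Suc k)) - VV (xk k) = (*) (y1 \<xi>) (xk (Suc k) - xk k)"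
  proof (rule mvt_very_simple)
    show "xk k \<le> xk (Suc k)" by (rule xk_Suc_le)
    fix x assume x: "xk k \<le> x" "x \<le> xk (Suc k)"
    have x01: "x \<in> {0..1}" using x cell_sub[OF k] by auto
    have "(VV has_real_derivative y1 x) (at x within {xk k..xk (Suc k)})"
      by (rule DERIV_subset[OF VV_deriv[OF x01] cell_sub[OF k]])
    then show "(VV has_derivative (*) (y1 x)) (at x within {xk k..xk (Suc k)})"
      by (simp add: has_field_derivative_def)
  qed
  then obtain \<xi> where \<xi>: "\<xi> \<in> {xk k..xk (Suc k)}"
    "VV (xk (Suc k)) - VV (xk k) = y1 \<xi> * (xk (Suc k) - xk k)" by auto
  have d: "xk (Suc k) - xk k = 1 / real N" by (simp add: xk_Suc)
  have "DD k = y1 \<xi>" unfolding DD_def \<xi>(2) d using Np by simp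
  then show ?thesis using \<xi>(1) by blast
qed

lemma GG_nonneg: "k < N \<Longrightarrow> 0 \<le> GG k"
  unfolding GG_def by (rule integral_nonneg) (use absg_int cell_sub xk_nonneg xk_le1 in auto)

lemma Cg_nonneg: "k < N \<Longrightarrow> 0 \<le> Cg k"
  unfolding Cg_def by (rule integral_nonneg) (use g2_int cell_sub xk_nonneg xk_le1 in auto)

lemma cellG:
  assumes k: "k < N" and s: "s \<in> {xk k..xk (Suc k)}" and t: "t \<in> {xk k..xk (Suc k)}"
  shows "\<bar>y1 t - y1 s\<bar> \<le> GG k"
  unfolding GG_def by (rule y1_bound[OF xk_nonneg xk_le1 s t]) (use k in simp)

lemma Dc_eq: "k < N \<Longrightarrow> Dc k = DD k" unfolding Dc_def by simp

lemma b1: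
  assumes k: "k < N" and t: "t \<in> {xk k..xk (Suc k)}"
  shows "\<bar>y1 t - Dc k\<bar> \<le> GG k"
proof -
  obtain \<xi> where \<xi>: "\<xi> \<in> {xk k..xk (Suc k)}" "DD k = y1 \<xi>" using DD_mvt[OF k] by blast
  show ?thesis unfolding Dc_eq[OF k] \<xi>(2) by (rule cellG[OF k \<xi>(1) t])
qed

lemma node_in_cells:
  "xk k \<in> {xk k..xk (Suc k)}" "xk (Suc k) \<in> {xk k..xk (Suc k)}"
  using xk_Suc_le[of k] by auto

lemma b2:
  assumes k: "k < N" and t: "t \<in> {xk k..xk (Suc k)}"
  shows "\<bar>y1 t - Dc (k - 1)\<bar> \<le> GG (k - 1) + GG k"
proof (cases k)
  case 0
  then show ?thesis using b1[OF k t] GG_nonneg[OF k] by simp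
next
  case (Suc j)
  have j: "j < N" using k Suc by simp
  obtain \<xi> where \<xi>: "\<xi> \<in> {xk j..xk (Suc j)}" "DD j = y1 \<xi>" using DD_mvt[OF j] by blast
  have e: "Dc (k - 1) = y1 \<xi>" using Suc Dc_eq[OF j] \<xi>(2) by simp
  have 1: "\<bar>y1 t - y1 (xk k)\<bar> \<le> GG k" by (rule cellG[OF k node_in_cells(1) t])
  have 2: "\<bar>y1 (xk k) - y1 \<xi>\<bar> \<le> GG j"
    using cellG[OF j \<xi>(1), of "xk k"] node_in_cells(2)[of j] Suc by simp
  have "\<bar>y1 t - y1 \<xi>\<bar> \<le> \<bar>y1 t - y1 (xk k)\<bar> + \<bar>y1 (xk k) - y1 \<xi>\<bar>"
    using abs_triangle_ineq[of "y1 t - y1 (xk k)" "y1 (xk k) - y1 \<xi>"] by simp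
  then show ?thesis using 1 2 e Suc by simp
qed

lemma b3:
  assumes k: "k < N" and t: "t \<in> {xk k..xk (Suc k)}"
  shows "\<bar>y1 t - Dc (Suc k)\<bar> \<le> GG k + GG (min (Suc k) (N - 1))"
proof (cases "Suc k < N")
  case True
  obtain \<xi> where \<xi>: "\<xi> \<in> {xk (Suc k)..xk (Suc (Suc k))}" "DD (Suc k) = y1 \<xi>"
    using DD_mvt[OF True] by blast
  have e: "Dc (Suc k) = y1 \<xi>" using Dc_eq[OF True] \<xi>(2) by simp
  have m: "min (Suc k) (N - 1) = Suc k" using True by simp
  have 1: "\<bar>y1 t - y1 (xk (Suc k))\<bar> \<le> GG k" by (rule cellG[OF k node_in_cells(2) t])
  have 2: "\<bar>y1 (xk (Suc k)) - y1 \<xi>\<bar> \<le> GG (Suc k)"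
    by (rule cellG[OF True \<xi>(1) node_in_cells(1)])
  have "\<bar>y1 t - y1 \<xi>\<bar> \<le> \<bar>y1 t - y1 (xk (Suc k))\<bar> + \<bar>y1 (xk (Suc k)) - y1 \<xi>\<bar>"
    using abs_triangle_ineq[of "y1 t - y1 (xk (Suc k))" "y1 (xk (Suc k)) - y1 \<xi>"] by simp
  then show ?thesis using 1 2 e m by simp
next
  case False
  then have kk: "k = N - 1" using k by simp
  have "Dc (Suc k) = Dc k" unfolding Dc_def using kk k by simp
  moreover have "min (Suc k) (N - 1) = k" using kk by simp
  ultimately show ?thesis using b1[OF k t] GG_nonneg[OF k] by simp
qed

lemma Gs_parts:
  assumes k: "k < N"
  shows "0 \<le> GG (k - 1)" "0 \<le> GG k" "0 \<le> GG (min (Suc k) (N - 1))"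
  using GG_nonneg k by auto

lemma absavg:
  assumes h: "\<bar>y - a\<bar> \<le> A" "\<bar>y - b\<bar> \<le> B" "A + B \<le> 2 * S"
  shows "\<bar>y - (a + b) / 2\<bar> \<le> (S::real)"
proof (rule abs_leI)
  show "y - (a + b) / 2 \<le> S" using abs_le_D1[OF h(1)] abs_le_D1[OF h(2)] h(3) by argo
  show "- (y - (a + b) / 2) \<le> S" using abs_le_D2[OF h(1)] abs_le_D2[OF h(2)] h(3) by argo
qed

lemma abs_tri2:
  assumes h: "\<bar>y - a\<bar> \<le> A" "\<bar>y - b\<bar> \<le> B"
  shows "\<bar>b - a\<bar> \<le> (A + B::real)"
proof (rule abs_leI)
  show "b - a \<le> A + B" using abs_le_D1[OF h(1)] abs_le_D2[OF h(2)] by argo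
  show "- (b - a) \<le> A + B" using abs_le_D2[OF h(1)] abs_le_D1[OF h(2)] by argo
qed

lemma lin3a: "0 \<le> p \<Longrightarrow> 0 \<le> r \<Longrightarrow> p + q + q \<le> 2 * (p + q + (r::real))" by simp
lemma lin3b: "0 \<le> p \<Longrightarrow> 0 \<le> r \<Longrightarrow> q + (q + r) \<le> 2 * (p + q + (r::real))" by simp
lemma lin3c: "0 \<le> p \<Longrightarrow> 0 \<le> q \<Longrightarrow> 0 \<le> r \<Longrightarrow> q + (p + q) \<le> 2 * (p + q + (r::real))" by simp

lemma Gs_nonneg: "k < N \<Longrightarrow> 0 \<le> Gs k"
  unfolding Gs_def using Gs_parts[of k] by (intro add_nonneg_nonneg) auto

lemma c1:
  assumes k: "k < N" and t: "t \<in> {xk k..xk (Suc k)}"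
  shows "\<bar>y1 t - PP k\<bar> \<le> Gs k"
  unfolding PP_def
  by (rule absavg[OF b2[OF k t] b1[OF k t]]) (unfold Gs_def, rule lin3a, use Gs_parts[OF k] in auto)

lemma c2:
  assumes k: "k < N" and t: "t \<in> {xk k..xk (Suc k)}"
  shows "\<bar>y1 t - PP (Suc k)\<bar> \<le> Gs k"
proof -
  have e: "PP (Suc k) = (Dc k + Dc (Suc k)) / 2" unfolding PP_def by simp
  show ?thesis unfolding e
    by (rule absavg[OF b1[OF k t] b3[OF k t]]) (unfold Gs_def, rule lin3b, use Gs_parts[OF k] in auto)
qed

lemma c3:
  assumes k: "k < N"
  shows "\<bar>Dc k - Dc (k - 1)\<bar> \<le> 2 * Gs k"
proof -
  have "\<bar>Dc k - Dc (k - 1)\<bar> \<le> (GG (k - 1) + GG k) + GG k"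
    by (rule abs_tri2[OF b2[OF k node_in_cells(1)] b1[OF k node_in_cells(1)]])
  also have "\<dots> \<le> 2 * Gs k" unfolding Gs_def by (rule lin3a) (use Gs_parts[OF k] in auto)
  finally show ?thesis .
qed

lemma c4:
  assumes k: "k < N"
  shows "\<bar>PP (Suc k) - PP k\<bar> \<le> 2 * Gs k"
  using abs_tri2[OF c1[OF k node_in_cells(1)] c2[OF k node_in_cells(1)]] by simp

end

context apx begin

lemma cell_u:
  assumes t: "t \<in> {xk k..xk (Suc k)}"
  shows "real k \<le> t * real N" "t * real N \<le> real k + 1" "(t - xk k) * real N = t * real N - real k"
proof -
  have a: "real k / real N \<le> t" "t \<le> real (Suc k) / real N" using t unfolding xk_def by auto
  show "real k \<le> t * real N" using a(1) Np by (simp add: divide_le_eq)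
  show "t * real N \<le> real k + 1" using a(2) Np by (simp add: le_divide_eq)
  show "(t - xk k) * real N = t * real N - real k" unfolding xk_def using Np by (simp add: field_simps)
qed

lemma hat_cell:
  assumes t: "t \<in> {xk k..xk (Suc k)}"
  shows "hat k t = 1 - (t - xk k) * real N" "hat (Suc k) t = (t - xk k) * real N"
    "j \<noteq> k \<Longrightarrow> j \<noteq> Suc k \<Longrightarrow> hat j t = 0"
proof -
  note u = cell_u[OF t]
  show "hat k t = 1 - (t - xk k) * real N" unfolding hat_def u(3) using u(1,2) by simp
  show "hat (Suc k) t = (t - xk k) * real N" unfolding hat_def u(3) using u(1,2) by simp
  assume j: "j \<noteq> k" "j \<noteq> Suc k"
  then have "j < k \<or> j > Suc k" by linarith
  then have "real j \<le> real k - 1 \<or> real j \<ge> real k + 2" by (auto simp: of_nat_less_iff[symmetric])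
  then have "1 - \<bar>t * real N - real j\<bar> \<le> 0" using u(1,2) by linarith
  then show "hat j t = 0" unfolding hat_def by simp
qed

lemma zp_cell:
  assumes k: "k < N" and t: "t \<in> {xk k..xk (Suc k)}"
  shows "zp t = PP k + (PP (Suc k) - PP k) * ((t - xk k) * real N)"
proof -
  have "zp t = (\<Sum>j\<in>{k, Suc k}. PP j * hat j t)"
    unfolding zp_def
    by (rule sum.mono_neutral_right) (use k hat_cell(3)[OF t] in auto)
  also have "\<dots> = PP k * hat k t + PP (Suc k) * hat (Suc k) t" by simp
  also have "\<dots> = PP k + (PP (Suc k) - PP k) * ((t - xk k) * real N)"
    unfolding hat_cell(1,2)[OF t] by (simp add: algebra_simps)
  finally show ?thesis .
qed

lemma zp_cont: "continuous_on A zp"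
  unfolding zp_def hat_def by (intro continuous_intros)

lemma zp_int: "zp integrable_on {a..b}"
  by (rule integrable_continuous_real[OF zp_cont])

lemma lam_bounds:
  assumes t: "t \<in> {xk k..xk (Suc k)}"
  shows "0 \<le> (t - xk k) * real N" "(t - xk k) * real N \<le> 1"
  using cell_u[OF t] by linarith+

lemma y1_zp:
  assumes k: "k < N" and t: "t \<in> {xk k..xk (Suc k)}"
  shows "\<bar>y1 t - zp t\<bar> \<le> Gs k"
proof -
  define l where "l = (t - xk k) * real N"
  have l: "0 \<le> l" "l \<le> 1" unfolding l_def using lam_bounds[OF t] by auto
  have "\<bar>y1 t - zp t\<bar> = \<bar>(1 - l) * (y1 t - PP k) + l * (y1 t - PP (Suc k))\<bar>"
    unfolding zp_cell[OF k t] l_def[symmetric] by (simp add: algebra_simps)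
  also have "\<dots> \<le> \<bar>(1 - l) * (y1 t - PP k)\<bar> + \<bar>l * (y1 t - PP (Suc k))\<bar>"
    by (rule abs_triangle_ineq)
  also have "\<dots> = (1 - l) * \<bar>y1 t - PP k\<bar> + l * \<bar>y1 t - PP (Suc k)\<bar>"
    using l by (simp add: abs_mult)
  also have "\<dots> \<le> (1 - l) * Gs k + l * Gs k"
    using l c1[OF k t] c2[OF k t] by (intro add_mono mult_left_mono) auto
  also have "\<dots> = Gs k" by (simp add: algebra_simps)
  finally show ?thesis .
qed

lemma Fk_deriv:
  "(Fk k has_real_derivative (PP k + (PP (Suc k) - PP k) * ((s - xk k) * real N))) (at s)"
proof -
  have d: "(Fk k has_real_derivative (PP k * 1 + (PP (Suc k) - PP k) * real N / 2 * (2 * (s - xk k) * 1))) (at s)"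
    unfolding Fk_def by (rule derivative_eq_intros refl | simp)+
  have e: "PP k * 1 + (PP (Suc k) - PP k) * real N / 2 * (2 * (s - xk k) * 1)
      = PP k + (PP (Suc k) - PP k) * ((s - xk k) * real N)" by (simp add: field_simps)
  show ?thesis using d[unfolded e] .
qed

lemma int_zp_cell:
  assumes k: "k < N" and t: "t \<in> {xk k..xk (Suc k)}"
  shows "integral {xk k..t} zp = Fk k t"
proof -
  have "(zp has_integral Fk k t - Fk k (xk k)) {xk k..t}"
  proof (rule fundamental_theorem_of_calculus)
    show "xk k \<le> t" using t by simp
    fix s assume s: "s \<in> {xk k..t}"
    then have s': "s \<in> {xk k..xk (Suc k)}" using t by auto
    have "(Fk k has_real_derivative zp s) (at s within {xk k..t})"
      using Fk_deriv[of k s] zp_cell[OF k s'] by (simp add: has_field_derivative_at_within)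
    then show "(Fk k has_vector_derivative zp s) (at s within {xk k..t})"
      by (simp add: has_real_derivative_iff_has_vector_derivative)
  qed
  moreover have "Fk k (xk k) = 0" unfolding Fk_def by simp
  ultimately show ?thesis by (simp add: integral_unique)
qed

lemma Fk_end: "Fk k (xk (Suc k)) = (PP k + PP (Suc k)) / (2 * real N)"
  unfolding Fk_def xk_Suc using Np by (simp add: field_simps power2_eq_square)

lemma ZZ_step:
  assumes k: "k < N"
  shows "ZZ (Suc k) = ZZ k + (PP k + PP (Suc k)) / (2 * real N)"
proof -
  have V: "VV (xk (Suc k)) = VV (xk k) + Dc k / real N"
    unfolding Dc_eq[OF k] DD_def using Np by (simp add: field_simps)
  show ?thesis
    unfolding ZZ_def PP_def V using Np by (simp add: field_simps)
qed

lemma VV0: "VV 0 = 0" unfolding VV_def by simp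

lemma zf_nodes: "k \<le> N \<Longrightarrow> zf (xk k) = ZZ k"
proof (induction k)
  case 0
  then show ?case unfolding zf_def ZZ_def by (simp add: VV0)
next
  case (Suc k)
  then have k: "k < N" by simp
  have "zf (xk (Suc k)) = integral {0..xk k} zp + integral {xk k..xk (Suc k)} zp"
    unfolding zf_def
    by (rule Henstock_Kurzweil_Integration.integral_combine[OF xk_nonneg xk_Suc_le zp_int, symmetric])
  also have "integral {0..xk k} zp = ZZ k" using Suc unfolding zf_def by simp
  also have "integral {xk k..xk (Suc k)} zp = Fk k (xk (Suc k))"
    by (rule int_zp_cell[OF k node_in_cells(2)])
  finally show ?case unfolding Fk_end ZZ_step[OF k] .
qed

lemma zf_0: "zf 0 = 0" unfolding zf_def by simp

lemma zf_1: "zf 1 = 0"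
proof -
  have "zf 1 = ZZ N" using zf_nodes[of N] by simp
  also have "\<dots> = 0"
    unfolding ZZ_def Dc_def using V1 N by (simp add: VV_def)
  finally show ?thesis .
qed

lemma zf_cell:
  assumes k: "k < N" and t: "t \<in> {xk k..xk (Suc k)}"
  shows "zf t = ZZ k + Fk k t"
proof -
  have "zf t = integral {0..xk k} zp + integral {xk k..t} zp"
    unfolding zf_def
    by (rule Henstock_Kurzweil_Integration.integral_combine[OF xk_nonneg _ zp_int, symmetric]) (use t in auto)
  also have "integral {0..xk k} zp = ZZ k" using zf_nodes[of k] k unfolding zf_def by simp
  also have "integral {xk k..t} zp = Fk k t" by (rule int_zp_cell[OF k t])
  finally show ?thesis .
qed

lemma VV_cell:
  assumes k: "k < N" and t: "t \<in> {xk k..xk (Suc k)}"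
  shows "VV t = VV (xk k) + integral {xk k..t} y1"
  unfolding VV_def
  by (rule Henstock_Kurzweil_Integration.integral_combine[OF xk_nonneg _ y1_int, symmetric])
     (use t cell_sub[OF k] in auto)

lemma err_cell:
  assumes k: "k < N" and t: "t \<in> {xk k..xk (Suc k)}"
  shows "\<bar>zf t - VV t\<bar> \<le> 2 * Gs k / real N"
proof -
  have t01: "t \<le> 1" using t cell_sub[OF k] by auto
  have i1: "zp integrable_on {xk k..t}" by (rule zp_int)
  have i2: "y1 integrable_on {xk k..t}" by (rule y1_int[OF xk_nonneg t01])
  have "zf t - VV t = (ZZ k - VV (xk k)) + (integral {xk k..t} zp - integral {xk k..t} y1)"
    unfolding zf_cell[OF k t] VV_cell[OF k t] int_zp_cell[OF k t] by simp
  also have "integral {xk k..t} zp - integral {xk k..t} y1 = integral {xk k..t} (\<lambda>s. zp s - y1 s)"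
    by (rule integral_diff[OF i1 i2, symmetric])
  also have "ZZ k - VV (xk k) = (Dc k - Dc (k - 1)) / (4 * real N)" unfolding ZZ_def by simp
  finally have e: "zf t - VV t = (Dc k - Dc (k - 1)) / (4 * real N) + integral {xk k..t} (\<lambda>s. zp s - y1 s)" .
  have "norm (integral {xk k..t} (\<lambda>s. zp s - y1 s)) \<le> integral {xk k..t} (\<lambda>s. Gs k)"
  proof (rule integral_norm_bound_integral)
    show "(\<lambda>s. zp s - y1 s) integrable_on {xk k..t}" by (rule integrable_diff[OF i1 i2])
    show "(\<lambda>s. Gs k) integrable_on {xk k..t}" by (rule integrable_const_ivl)
    fix s assume "s \<in> {xk k..t}"
    then have s: "s \<in> {xk k..xk (Suc k)}" using t by auto
    show "norm (zp s - y1 s) \<le> Gs k" using y1_zp[OF k s] by (simp add: abs_minus_commute)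
  qed
  also have "integral {xk k..t} (\<lambda>s. Gs k) = (t - xk k) * Gs k" using t by simp
  also have "\<dots> \<le> (1 / real N) * Gs k"
    using t Gs_nonneg[OF k] unfolding xk_Suc by (intro mult_right_mono) auto
  finally have 1: "\<bar>integral {xk k..t} (\<lambda>s. zp s - y1 s)\<bar> \<le> Gs k / real N" by simp
  have 2: "\<bar>(Dc k - Dc (k - 1)) / (4 * real N)\<bar> \<le> Gs k / (2 * real N)"
    using c3[OF k] Np by (simp add: abs_divide field_simps)
  have "\<bar>zf t - VV t\<bar> \<le> \<bar>(Dc k - Dc (k - 1)) / (4 * real N)\<bar> + \<bar>integral {xk k..t} (\<lambda>s. zp s - y1 s)\<bar>"
    unfolding e by (rule abs_triangle_ineq)
  also have "\<dots> \<le> Gs k / (2 * real N) + Gs k / real N" by (rule add_mono[OF 2 1])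
  also have "\<dots> \<le> 2 * Gs k / real N" using Gs_nonneg[OF k] Np by (simp add: field_simps)
  finally show ?thesis .
qed

end

lemma sq_le_from_abs: "\<bar>x::real\<bar> \<le> B \<Longrightarrow> x\<^sup>2 \<le> B\<^sup>2"
  using power_mono[of "\<bar>x\<bar>" B 2] by simp

lemma sq3: "((a::real) + b + c)\<^sup>2 \<le> 3 * (a\<^sup>2 + b\<^sup>2 + c\<^sup>2)"
proof -
  have "0 \<le> (a - b)\<^sup>2 + (b - c)\<^sup>2 + (a - c)\<^sup>2" by simp
  moreover have "3 * (a\<^sup>2 + b\<^sup>2 + c\<^sup>2) - (a + b + c)\<^sup>2 = (a - b)\<^sup>2 + (b - c)\<^sup>2 + (a - c)\<^sup>2"
    by (simp add: power2_eq_square algebra_simps)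
  ultimately show ?thesis by linarith
qed

context apx begin

lemma zf_eq: "zf = (\<lambda>x. integral {0..x} zp)" by (rule ext) (simp add: zf_def)
lemma VV_eq: "VV = (\<lambda>x. integral {0..x} y1)" by (rule ext) (simp add: VV_def)

lemma zf_cont: "continuous_on {0..1} zf"
  unfolding zf_eq by (rule indefinite_integral_continuous_1[OF zp_int])

lemma VV_cont: "continuous_on {0..1} VV"
  unfolding VV_eq by (rule indefinite_integral_continuous_1[OF y1_int]) auto

definition Ig where "Ig = integral {0..1} (\<lambda>t. (g t)\<^sup>2)"

lemma Ig_sum: "Ig = (\<Sum>k<N. Cg k)"
  unfolding Ig_def Cg_def xk_def by (rule sum_cells[OF N g2_int]) auto

lemma GG_sq: "k < N \<Longrightarrow> (GG k)\<^sup>2 \<le> Cg k / real N"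
proof -
  assume k: "k < N"
  have a: "0 \<le> xk k" "xk (Suc k) \<le> 1" using xk_nonneg xk_le1[of "Suc k"] k by auto
  have "(GG k)\<^sup>2 \<le> (xk (Suc k) - xk k) * Cg k"
    unfolding GG_def Cg_def by (rule cs_interval[OF xk_Suc_le absg_int[OF a] g2_int[OF a]])
  also have "xk (Suc k) - xk k = 1 / real N" by (simp add: xk_Suc)
  finally show ?thesis by simp
qed

definition Sk where "Sk k = Cg (k - 1) + Cg k + Cg (min (Suc k) (N - 1))"

lemma Gs_sq: "k < N \<Longrightarrow> (Gs k)\<^sup>2 \<le> 3 * Sk k / real N"
proof -
  assume k: "k < N"
  have "(Gs k)\<^sup>2 \<le> 3 * ((GG (k - 1))\<^sup>2 + (GG k)\<^sup>2 + (GG (min (Suc k) (N - 1)))\<^sup>2)"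
    unfolding Gs_def by (rule sq3)
  also have "\<dots> \<le> 3 * (Cg (k - 1) / real N + Cg k / real N + Cg (min (Suc k) (N - 1)) / real N)"
    using GG_sq[of "k - 1"] GG_sq[of k] GG_sq[of "min (Suc k) (N - 1)"] k
    by (intro mult_left_mono add_mono) auto
  also have "\<dots> = 3 * Sk k / real N" unfolding Sk_def by (simp add: add_divide_distrib)
  finally show ?thesis .
qed

lemma Sk_sum: "(\<Sum>k<N. Sk k) \<le> 5 * Ig"
proof -
  have "(\<Sum>k<N. Sk k) = (\<Sum>k<N. Cg (k - 1)) + (\<Sum>k<N. Cg k) + (\<Sum>k<N. Cg (min (Suc k) (N - 1)))"
    unfolding Sk_def by (simp add: sum.distrib)
  also have "\<dots> \<le> 2 * (\<Sum>k<N. Cg k) + (\<Sum>k<N. Cg k) + 2 * (\<Sum>k<N. Cg k)"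
    using sum_shift_down[OF N, of Cg] sum_shift_up[OF N, of Cg] Cg_nonneg
    by (intro add_mono) auto
  finally show ?thesis unfolding Ig_sum by simp
qed

lemma Sk_nonneg: "k < N \<Longrightarrow> 0 \<le> Sk k"
  unfolding Sk_def using Cg_nonneg[of "k - 1"] Cg_nonneg[of k] Cg_nonneg[of "min (Suc k) (N - 1)"]
  by (intro add_nonneg_nonneg) auto

lemma err_int: "integral {0..1} (\<lambda>t. (zf t - VV t)\<^sup>2) \<le> 60 * Ig / (real N * real N * real N * real N)"
proof -
  let ?f = "\<lambda>t. (zf t - VV t)\<^sup>2"
  have i: "?f integrable_on {0..1}"
    by (rule integrable_continuous_real) (intro continuous_intros zf_cont VV_cont)
  have "integral {0..1} ?f = (\<Sum>k<N. integral {xk k..xk (Suc k)} ?f)"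
    unfolding xk_def by (rule sum_cells[OF N i])
  also have "\<dots> \<le> (\<Sum>k<N. 12 * Sk k / (real N * real N * real N * real N))"
  proof (rule sum_mono)
    fix k assume "k \<in> {..<N}"
    then have k: "k < N" by simp
    have "integral {xk k..xk (Suc k)} ?f \<le> integral {xk k..xk (Suc k)} (\<lambda>t. (2 * Gs k / real N)\<^sup>2)"
    proof (rule integral_le)
      show "?f integrable_on {xk k..xk (Suc k)}"
        by (rule integrable_on_subinterval[OF i cell_sub[OF k]])
      show "(\<lambda>t. (2 * Gs k / real N)\<^sup>2) integrable_on {xk k..xk (Suc k)}" by (rule integrable_const_ivl)
      fix t assume "t \<in> {xk k..xk (Suc k)}"
      then show "?f t \<le> (2 * Gs k / real N)\<^sup>2" by (rule sq_le_from_abs[OF err_cell[OF k]])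
    qed
    also have "\<dots> = (2 * Gs k / real N)\<^sup>2 / real N" using xk_Suc_le[of k] by (simp add: xk_Suc)
    also have "\<dots> = 4 * (Gs k)\<^sup>2 / (real N * real N * real N)"
      using Np by (simp add: power2_eq_square field_simps)
    also have "\<dots> \<le> 4 * (3 * Sk k / real N) / (real N * real N * real N)"
      using Gs_sq[OF k] Np by (intro divide_right_mono mult_left_mono) auto
    also have "\<dots> = 12 * Sk k / (real N * real N * real N * real N)"
      using Np by (simp add: field_simps)
    finally show "integral {xk k..xk (Suc k)} ?f \<le> 12 * Sk k / (real N * real N * real N * real N)" .
  qed
  also have "\<dots> = 12 * (\<Sum>k<N. Sk k) / (real N * real N * real N * real N)"
    by (simp add: sum_divide_distrib[symmetric] sum_distrib_left[symmetric])
  also have "\<dots> \<le> 12 * (5 * Ig) / (real N * real N * real N * real N)"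
    using Sk_sum Np by (intro divide_right_mono mult_left_mono) auto
  finally show ?thesis by simp
qed

lemma gzz_cell:
  assumes k: "k < N"
  shows "integral {xk k..xk (Suc k)} (\<lambda>t. (gzz t)\<^sup>2) = (sig k)\<^sup>2 / real N"
proof -
  have "integral {xk k..xk (Suc k)} (\<lambda>t. (gzz t)\<^sup>2) = integral {xk k..xk (Suc k)} (\<lambda>t. (sig k)\<^sup>2)"
  proof (rule integral_spike[of "{xk k, xk (Suc k)}"])
    show "negligible {xk k, xk (Suc k)}" by simp
    fix t assume "t \<in> {xk k..xk (Suc k)} - {xk k, xk (Suc k)}"
    then have t: "real k / real N < t" "t < real (Suc k) / real N" unfolding xk_def by auto
    show "(sig k)\<^sup>2 = (gzz t)\<^sup>2" unfolding gzz_def using stepf_open[OF N k t] by simp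
  qed
  also have "\<dots> = (sig k)\<^sup>2 / real N" using xk_Suc_le[of k] by (simp add: xk_Suc)
  finally show ?thesis .
qed

lemma gzz_int: "integral {0..1} (\<lambda>t. (gzz t)\<^sup>2) \<le> 60 * Ig"
proof -
  have i: "(\<lambda>t. (gzz t)\<^sup>2) integrable_on {0..1}"
    using integrable_M01_sub(2)[OF L2_sq_int[OF stepf_L2]] unfolding gzz_def by auto
  have "integral {0..1} (\<lambda>t. (gzz t)\<^sup>2) = (\<Sum>k<N. integral {xk k..xk (Suc k)} (\<lambda>t. (gzz t)\<^sup>2))"
    unfolding xk_def by (rule sum_cells[OF N i])
  also have "\<dots> \<le> (\<Sum>k<N. 12 * Sk k)"
  proof (rule sum_mono)
    fix k assume "k \<in> {..<N}"
    then have k: "k < N" by simp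
    have "integral {xk k..xk (Suc k)} (\<lambda>t. (gzz t)\<^sup>2) = (sig k)\<^sup>2 / real N" by (rule gzz_cell[OF k])
    also have "\<dots> = (PP (Suc k) - PP k)\<^sup>2 * real N"
      unfolding sig_def using Np by (simp add: power2_eq_square field_simps)
    also have "\<dots> \<le> (2 * Gs k)\<^sup>2 * real N"
      using sq_le_from_abs[OF c4[OF k]] Np by (intro mult_right_mono) auto
    also have "\<dots> = 4 * (Gs k)\<^sup>2 * real N" by (simp add: power2_eq_square)
    also have "\<dots> \<le> 4 * (3 * Sk k / real N) * real N"
      using Gs_sq[OF k] Np by (intro mult_right_mono mult_left_mono) auto
    also have "\<dots> = 12 * Sk k" using Np by simp
    finally show "integral {xk k..xk (Suc k)} (\<lambda>t. (gzz t)\<^sup>2) \<le> 12 * Sk k" .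
  qed
  also have "\<dots> = 12 * (\<Sum>k<N. Sk k)" by (simp add: sum_distrib_left)
  also have "\<dots> \<le> 12 * (5 * Ig)" using Sk_sum by simp
  finally show ?thesis by simp
qed

lemma zp_deriv:
  assumes k: "k < N" and t: "real k / real N < t" "t < real (Suc k) / real N"
  shows "(zp has_real_derivative gzz t) (at t)"
proof -
  define U where "U = {real k / real N <..< real (Suc k) / real N}"
  have oU: "open U" unfolding U_def by simp
  have tU: "t \<in> U" using t unfolding U_def by simp
  have eq: "\<forall>s\<in>U. PP k + (PP (Suc k) - PP k) * ((s - xk k) * real N) = zp s"
  proof
    fix s assume "s \<in> U"
    then have "s \<in> {xk k..xk (Suc k)}" unfolding U_def xk_def by auto
    then show "PP k + (PP (Suc k) - PP k) * ((s - xk k) * real N) = zp s" using zp_cell[OF k] by simp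
  qed
  have "((\<lambda>s. PP k + (PP (Suc k) - PP k) * ((s - xk k) * real N)) has_real_derivative
      (PP (Suc k) - PP k) * (1 * real N)) (at t)"
    by (rule derivative_eq_intros refl | simp)+
  then have "(zp has_real_derivative (PP (Suc k) - PP k) * (1 * real N)) (at t)"
    by (rule has_field_derivative_transform_within_open[OF _ oU tU]) (use eq in auto)
  moreover have "gzz t = sig k" unfolding gzz_def using stepf_open[OF N k t] by simp
  ultimately show ?thesis unfolding sig_def by simp
qed

lemma zf_H2: "H2_0 zf gzz"
proof -
  have gL: "L2 gzz" unfolding gzz_def by (rule stepf_L2)
  have "\<forall>x\<in>{0..1}. zp x = zp 0 + integral {0..x} gzz \<and> zf x = zf 0 + integral {0..x} zp"
  proof
    fix x :: real assume x: "x \<in> {0..1}"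
    have "(gzz has_integral zp x - zp 0) {0..x}"
    proof (rule fundamental_theorem_of_calculus_strong[OF finite_nodes[of N]])
      show "0 \<le> x" using x by simp
      show "continuous_on {0..x} zp" by (rule zp_cont)
      fix t assume t: "t \<in> {0..x} - nodes N"
      then obtain k where k: "k < N" "real k / real N < t" "t < real (Suc k) / real N"
        using cell_open[OF N, of t] x by auto
      show "(zp has_vector_derivative gzz t) (at t)"
        using zp_deriv[OF k] by (simp add: has_real_derivative_iff_has_vector_derivative)
    qed
    then have 1: "zp x = zp 0 + integral {0..x} gzz" by (simp add: integral_unique)
    have 2: "zf x = zf 0 + integral {0..x} zp" unfolding zf_0 by (simp add: zf_def)
    show "zp x = zp 0 + integral {0..x} gzz \<and> zf x = zf 0 + integral {0..x} zp" using 1 2 by blast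
  qed
  then have "\<exists>y1. \<forall>x\<in>{0..1}. y1 x = y1 0 + integral {0..x} gzz \<and> zf x = zf 0 + integral {0..x} y1"
    by (rule exI[where x=zp])
  then show ?thesis unfolding H2_0_iff[OF gL] using zf_0 zf_1 by blast
qed

lemma zf_spline: "zf \<in> spline_space N"
proof -
  have d: "\<forall>x\<in>{0..1}. (zf has_real_derivative zp x) (at x within {0..1})"
    unfolding zf_eq using integral_has_real_derivative[OF zp_cont] by blast
  have p: "\<exists>a b c. \<forall>x\<in>{real k / real N..real (Suc k) / real N}. zf x = a + b * x + c * x\<^sup>2"
    if k: "k < N" for k
  proof -
    define c where "c = (PP (Suc k) - PP k) * real N / 2"
    show ?thesis
    proof (intro exI ballI)
      fix x assume "x \<in> {real k / real N..real (Suc k) / real N}"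
      then have x: "x \<in> {xk k..xk (Suc k)}" unfolding xk_def by simp
      show "zf x = (ZZ k - PP k * xk k + c * (xk k)\<^sup>2) + (PP k - 2 * c * xk k) * x + c * x\<^sup>2"
        unfolding zf_cell[OF k x] Fk_def c_def[symmetric] by (simp add: power2_eq_square algebra_simps)
    qed
  qed
  show ?thesis unfolding spline_space_def using zf_0 zf_1 zp_cont d p by blast
qed

lemma approx:
  "\<exists>z gz. z \<in> spline_space N \<and> H2_0 z gz
     \<and> integral {0..1} (\<lambda>t. (z t - VV t)\<^sup>2) \<le> 60 * Ig / (real N * real N * real N * real N)
     \<and> integral {0..1} (\<lambda>t. (gz t)\<^sup>2) \<le> 60 * Ig"
  using zf_spline zf_H2 err_int gzz_int by blast

end

lemma approx_L2:
  assumes N: "N \<ge> 1" and v: "H2_0 v g"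
  shows "\<exists>z gz. z \<in> spline_space N \<and> H2_0 z gz
     \<and> integral\<^sup>L M01 (\<lambda>t. (z t - v t)\<^sup>2) \<le> 60 * (L2norm g)\<^sup>2 * (1 / real N) ^ 4
     \<and> integral\<^sup>L M01 (\<lambda>t. (gz t)\<^sup>2) \<le> 60 * (L2norm g)\<^sup>2"
proof -
  obtain y1 where y1: "L2 g" "v 0 = 0" "v 1 = 0" "continuous_on {0..1} y1"
    "\<forall>x\<in>{0..1}. y1 x = y1 0 + integral {0..x} g" "\<forall>x\<in>{0..1}. v x = integral {0..x} y1"
    by (rule H2_0_props[OF v])
  have "v 1 = integral {0..1} y1" using y1(6) by simp
  then have V1: "integral {0..1} y1 = 0" using y1(3) by simp
  interpret A: apx N g y1
    apply unfold_locales
       apply (rule N)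
      apply (rule y1(1))
     apply (rule y1(5))
    apply (rule V1)
    done
  obtain z gz where z: "z \<in> spline_space N" "H2_0 z gz"
    "integral {0..1} (\<lambda>t. (z t - A.VV t)\<^sup>2) \<le> 60 * A.Ig / (real N * real N * real N * real N)"
    "integral {0..1} (\<lambda>t. (gz t)\<^sup>2) \<le> 60 * A.Ig"
    using A.approx by blast
  have Ig: "A.Ig = (L2norm g)\<^sup>2"
    unfolding A.Ig_def L2norm_sq
    by (rule integrable_M01_sub(3)[OF L2_sq_int[OF y1(1)], symmetric]) auto
  have zc: "continuous_on {0..1} z" by (rule H2_0_cont[OF z(2)])
  have e1: "integral\<^sup>L M01 (\<lambda>t. (z t - v t)\<^sup>2) = integral\<^sup>L M01 (\<lambda>t. (z t - A.VV t)\<^sup>2)"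
  proof (rule Bochner_Integration.integral_cong[OF refl])
    fix t assume "t \<in> space M01"
    then have t: "t \<in> {0..1}" by simp
    have "v t = integral {0..t} y1" using y1(6) t by blast
    then show "(z t - v t)\<^sup>2 = (z t - A.VV t)\<^sup>2" by (simp add: A.VV_def)
  qed
  also have "\<dots> = integral {0..1} (\<lambda>t. (z t - A.VV t)\<^sup>2)"
    by (rule cont_int_eq) (intro continuous_intros zc A.VV_cont)
  finally have e1': "integral\<^sup>L M01 (\<lambda>t. (z t - v t)\<^sup>2) = integral {0..1} (\<lambda>t. (z t - A.VV t)\<^sup>2)" .
  have e2: "integral\<^sup>L M01 (\<lambda>t. (gz t)\<^sup>2) = integral {0..1} (\<lambda>t. (gz t)\<^sup>2)"
    by (rule integrable_M01_sub(3)[OF L2_sq_int[OF H2_0_L2g[OF z(2)]]]) auto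
  have h4: "1 / (real N * real N * real N * real N) = (1 / real N) ^ 4"
    by (simp add: power4_eq_xxxx)
  have "60 * A.Ig / (real N * real N * real N * real N) = 60 * (L2norm g)\<^sup>2 * (1 / real N) ^ 4"
    unfolding Ig h4[symmetric] by simp
  then show ?thesis using z e1' e2 Ig by (intro exI[of _ z] exI[of _ gz]) auto
qed

lemma H2_0_zero: "H2_0 (\<lambda>x. 0) (\<lambda>x. 0)"
  unfolding H2_0_iff[OF L2_zero] by (intro conjI exI[of _ "\<lambda>x. 0"]) auto

lemma sq_sum_le: "((a::real) + b)\<^sup>2 \<le> 2 * a\<^sup>2 + 2 * b\<^sup>2"
proof -
  have "0 \<le> (a - b)\<^sup>2" by simp
  moreover have "2 * a\<^sup>2 + 2 * b\<^sup>2 - (a + b)\<^sup>2 = (a - b)\<^sup>2" by (simp add: power2_eq_square algebra_simps)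
  ultimately show ?thesis by linarith
qed

lemma key_bound:
  assumes N: "N \<ge> 1" and u: "L2 u" and ds: "discrete_sol N ((1 / real N) ^ 4) u yr" and v: "H2_0 v g"
  shows "L2norm (\<lambda>x. yr x - u x) \<le> 15 * (L2norm (\<lambda>x. u x - v x) + (1 / real N)\<^sup>2 * L2norm g)"
proof -
  define h where "h = 1 / real N"
  have h0: "h \<ge> 0" unfolding h_def by simp
  obtain z gz where z: "z \<in> spline_space N" "H2_0 z gz"
    "integral\<^sup>L M01 (\<lambda>t. (z t - v t)\<^sup>2) \<le> 60 * (L2norm g)\<^sup>2 * h ^ 4"
    "integral\<^sup>L M01 (\<lambda>t. (gz t)\<^sup>2) \<le> 60 * (L2norm g)\<^sup>2"
    using approx_L2[OF N v] unfolding h_def by blast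
  have m: "integral\<^sup>L M01 (\<lambda>x. (yr x - u x)\<^sup>2) \<le> integral\<^sup>L M01 (\<lambda>x. (z x - u x)\<^sup>2)
      + h ^ 4 * integral\<^sup>L M01 (\<lambda>x. (gz x)\<^sup>2)"
    using min_prop[OF N u ds _ z(1,2)] unfolding h_def by simp
  have Lz: "L2 z" by (rule H2_0_L2[OF z(2)])
  have Lv: "L2 v" by (rule H2_0_L2[OF v])
  have L1: "L2 (\<lambda>x. z x - v x)" by (rule L2_diff[OF Lz Lv])
  have L2': "L2 (\<lambda>x. v x - u x)" by (rule L2_diff[OF Lv u])
  have "integral\<^sup>L M01 (\<lambda>x. (z x - u x)\<^sup>2) \<le> integral\<^sup>L M01 (\<lambda>x. 2 * (z x - v x)\<^sup>2 + 2 * (v x - u x)\<^sup>2)"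
  proof (rule integral_mono)
    show "integrable M01 (\<lambda>x. (z x - u x)\<^sup>2)" using L2_sq_int[OF L2_diff[OF Lz u]] .
    show "integrable M01 (\<lambda>x. 2 * (z x - v x)\<^sup>2 + 2 * (v x - u x)\<^sup>2)"
      using L2_sq_int[OF L1] L2_sq_int[OF L2'] by simp
    fix x
    show "(z x - u x)\<^sup>2 \<le> 2 * (z x - v x)\<^sup>2 + 2 * (v x - u x)\<^sup>2"
      using sq_sum_le[of "z x - v x" "v x - u x"] by simp
  qed
  also have "\<dots> = 2 * integral\<^sup>L M01 (\<lambda>x. (z x - v x)\<^sup>2) + 2 * integral\<^sup>L M01 (\<lambda>x. (v x - u x)\<^sup>2)"
    using L2_sq_int[OF L1] L2_sq_int[OF L2'] by simp
  also have "integral\<^sup>L M01 (\<lambda>x. (v x - u x)\<^sup>2) = (L2norm (\<lambda>x. u x - v x))\<^sup>2"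
    unfolding L2norm_sq by (rule Bochner_Integration.integral_cong[OF refl]) (simp add: power2_commute)
  finally have zu: "integral\<^sup>L M01 (\<lambda>x. (z x - u x)\<^sup>2) \<le> 2 * integral\<^sup>L M01 (\<lambda>x. (z x - v x)\<^sup>2)
      + 2 * (L2norm (\<lambda>x. u x - v x))\<^sup>2" .
  define A where "A = L2norm (\<lambda>x. u x - v x)"
  define X where "X = h\<^sup>2 * L2norm g"
  have A0: "A \<ge> 0" unfolding A_def by (rule L2norm_nonneg)
  have X0: "X \<ge> 0" unfolding X_def using L2norm_nonneg h0 by simp
  have hX: "h ^ 4 * (L2norm g)\<^sup>2 = X\<^sup>2" unfolding X_def by (simp add: power_mult_distrib power_mult[symmetric])
  have h4: "h ^ 4 \<ge> 0" using h0 by simp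
  have g1: "h ^ 4 * integral\<^sup>L M01 (\<lambda>x. (gz x)\<^sup>2) \<le> h ^ 4 * (60 * (L2norm g)\<^sup>2)"
    by (rule mult_left_mono[OF z(4) h4])
  have t1: "60 * (L2norm g)\<^sup>2 * h ^ 4 = 60 * X\<^sup>2" using hX by (simp add: algebra_simps)
  have t2: "h ^ 4 * (60 * (L2norm g)\<^sup>2) = 60 * X\<^sup>2" using hX by (simp add: algebra_simps)
  have E: "integral\<^sup>L M01 (\<lambda>x. (yr x - u x)\<^sup>2) \<le> 180 * X\<^sup>2 + 2 * A\<^sup>2"
    using m zu z(3) g1 t1 t2 unfolding A_def by linarith
  have AX: "0 \<le> A * X" using A0 X0 by simp
  have sq: "(15 * (A + X))\<^sup>2 = 225 * A\<^sup>2 + 450 * (A * X) + 225 * X\<^sup>2"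
    by (simp add: power2_eq_square algebra_simps)
  have "integral\<^sup>L M01 (\<lambda>x. (yr x - u x)\<^sup>2) \<le> (15 * (A + X))\<^sup>2"
    using E AX sq zero_le_power2[of A] zero_le_power2[of X] by linarith
  then have "L2norm (\<lambda>x. yr x - u x) \<le> 15 * (A + X)"
    by (rule L2norm_le_from_sq) (use A0 X0 in simp)
  then show ?thesis unfolding A_def X_def h_def .
qed

lemma Kset_nonempty: "{L2norm (\<lambda>x. u x - v x) + t * L2norm g | v g. H2_0 v g} \<noteq> {}"
  using H2_0_zero by blast

lemma Kset_bdd: "0 \<le> t \<Longrightarrow> bdd_below {L2norm (\<lambda>x. u x - v x) + t * L2norm g | v g. H2_0 v g}"
  unfolding bdd_below_def using L2norm_nonneg
  by (intro exI[of _ 0]) (auto intro!: add_nonneg_nonneg mult_nonneg_nonneg)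

lemma Kfun_nonneg: "0 \<le> t \<Longrightarrow> 0 \<le> Kfun t u"
  unfolding Kfun_def using L2norm_nonneg
  by (intro cInf_greatest[OF Kset_nonempty]) (auto intro!: add_nonneg_nonneg mult_nonneg_nonneg)

lemma Kfun_le: "0 \<le> t \<Longrightarrow> H2_0 v g \<Longrightarrow> Kfun t u \<le> L2norm (\<lambda>x. u x - v x) + t * L2norm g"
  unfolding Kfun_def by (rule cInf_lower[OF _ Kset_bdd]) auto

lemma Kfun_mono:
  assumes t: "0 \<le> t" "t \<le> t'"
  shows "Kfun t u \<le> Kfun t' u"
  unfolding Kfun_def[of t']
proof (rule cInf_greatest[OF Kset_nonempty])
  fix x assume "x \<in> {L2norm (\<lambda>x. u x - v x) + t' * L2norm g | v g. H2_0 v g}"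
  then obtain v g where x: "x = L2norm (\<lambda>x. u x - v x) + t' * L2norm g" "H2_0 v g" by blast
  have "Kfun t u \<le> L2norm (\<lambda>x. u x - v x) + t * L2norm g" by (rule Kfun_le[OF t(1) x(2)])
  also have "\<dots> \<le> x" unfolding x(1) using mult_right_mono[OF t(2) L2norm_nonneg] by simp
  finally show "Kfun t u \<le> x" .
qed

lemma Kfun_bound:
  assumes s: "0 < s" "s < 1" and t0: "0 < t0" and fin: "Kint s u < \<infinity>"
  shows "Kfun t0 u \<le> sqrt 8 * t0 powr s * sqrt (enn2real (Kint s u))"
proof -
  define K0 where "K0 = Kfun t0 u"
  define w where "w = t0 powr s"
  define E where "E = enn2real (Kint s u)"
  define c0 where "c0 = K0\<^sup>2 / (8 * w\<^sup>2 * t0)"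
  have K0: "0 \<le> K0" unfolding K0_def using Kfun_nonneg t0 by simp
  have w: "0 < w" unfolding w_def using t0 by simp
  have c0: "0 \<le> c0" unfolding c0_def using K0 w t0 by simp
  have pt: "c0 \<le> (t powr (- s) * Kfun t u)\<^sup>2 / t" if t: "t \<in> {t0..2 * t0}" for t
  proof -
    have tpos: "0 < t" using t t0 by simp
    have Kt: "K0 \<le> Kfun t u" unfolding K0_def by (rule Kfun_mono) (use t t0 in auto)
    have p: "0 < t powr s" using tpos by simp
    have "t powr s \<le> (2 * t0) powr s" by (rule powr_mono2) (use s t tpos in auto)
    also have "\<dots> = 2 powr s * w" unfolding w_def using t0 by (simp add: powr_mult)
    also have "2 powr s \<le> 2 powr 1" by (rule powr_mono) (use s in auto)
    then have "2 powr s * w \<le> 2 * w" using w by simp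
    finally have tp: "t powr s \<le> 2 * w" .
    have e: "(t powr (- s) * Kfun t u)\<^sup>2 / t = (Kfun t u)\<^sup>2 / ((t powr s)\<^sup>2 * t)"
      using p tpos by (simp add: powr_minus power2_eq_square field_simps)
    have n: "K0\<^sup>2 \<le> (Kfun t u)\<^sup>2" using Kt K0 by (simp add: power_mono)
    have d: "(t powr s)\<^sup>2 * t \<le> (2 * w)\<^sup>2 * (2 * t0)"
      using tp p t tpos by (intro mult_mono power_mono) auto
    have "K0\<^sup>2 / ((2 * w)\<^sup>2 * (2 * t0)) \<le> (Kfun t u)\<^sup>2 / ((t powr s)\<^sup>2 * t)"
      by (rule frac_le) (use n d p tpos in auto)
    moreover have "K0\<^sup>2 / ((2 * w)\<^sup>2 * (2 * t0)) = c0" unfolding c0_def by (simp add: power2_eq_square)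
    ultimately show ?thesis using e by simp
  qed
  have A: "{t0..2 * t0} \<in> sets (lebesgue_on {0<..})"
    by (subst sets_restrict_space_iff) (use t0 in auto)
  have mA: "emeasure (lebesgue_on {0<..}) {t0..2 * t0} = ennreal t0"
    by (subst emeasure_restrict_space) (use t0 in auto)
  have "(\<integral>\<^sup>+ t. ennreal c0 * indicator {t0..2 * t0} t \<partial>(lebesgue_on {0<..})) \<le> Kint s u"
    unfolding Kint_def
  proof (rule nn_integral_mono)
    fix t :: real assume "t \<in> space (lebesgue_on {0<..})"
    then have tpos: "0 < t" by simp
    show "ennreal c0 * indicator {t0..2 * t0} t \<le> ennreal ((t powr - s * Kfun t u)\<^sup>2 / t)"
    proof (cases "t \<in> {t0..2 * t0}")
      case True
      then show ?thesis using pt[OF True] by (simp add: ennreal_leI)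
    next
      case False
      then show ?thesis by simp
    qed
  qed
  moreover have "(\<integral>\<^sup>+ t. ennreal c0 * indicator {t0..2 * t0} t \<partial>(lebesgue_on {0<..})) = ennreal (c0 * t0)"
    using nn_integral_cmult_indicator[OF A, of "ennreal c0"] mA c0 t0 by (simp add: ennreal_mult)
  ultimately have le: "ennreal (c0 * t0) \<le> Kint s u" by simp
  have "c0 * t0 \<le> E"
    unfolding E_def using enn2real_mono[OF le] fin c0 t0 by simp
  moreover have "c0 * t0 = K0\<^sup>2 / (8 * w\<^sup>2)" unfolding c0_def using t0 by (simp add: field_simps)
  ultimately have "K0\<^sup>2 / (8 * w\<^sup>2) \<le> E" by simp
  then have "K0\<^sup>2 \<le> 8 * w\<^sup>2 * E" using w by (simp add: divide_le_eq mult.commute)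
  then have "sqrt (K0\<^sup>2) \<le> sqrt (8 * w\<^sup>2 * E)" by (rule real_sqrt_le_mono)
  also have "sqrt (8 * w\<^sup>2 * E) = sqrt 8 * w * sqrt E" using w by (simp add: real_sqrt_mult)
  finally show ?thesis unfolding K0_def w_def E_def using K0 K0_def by simp
qed

theorem mainTheorem12:
  shows "\<exists>c::real. \<forall>N::nat. N \<ge> 1 \<longrightarrow>
    (\<forall>ybar yr. L2 ybar \<longrightarrow> discrete_sol N ((1 / real N) ^ 4) ybar yr \<longrightarrow>
      L2norm (\<lambda>x. yr x - ybar x) \<le> c * L2norm ybar
      \<and> (\<forall>g. H2_0 ybar g \<longrightarrow>
            L2norm (\<lambda>x. yr x - ybar x) \<le> c * (1 / real N)\<^sup>2 * L2norm g)
      \<and> (\<forall>s\<in>{0..1}. ybar \<in> interp_space s \<longrightarrow>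
            L2norm (\<lambda>x. yr x - ybar x) \<le> c * (1 / real N) powr (2 * s) * interp_norm s ybar))"
proof (rule exI[of _ 45], intro allI impI)
  fix N :: nat and ybar yr :: "real \<Rightarrow> real"
  assume N: "N \<ge> 1" and u: "L2 ybar" and ds: "discrete_sol N ((1 / real N) ^ 4) ybar yr"
  define h where "h = 1 / real N"
  have hpos: "0 < h" unfolding h_def using N by simp
  define e where "e = L2norm (\<lambda>x. yr x - ybar x)"
  have e0: "0 \<le> e" unfolding e_def by (rule L2norm_nonneg)
  have KB: "e \<le> 15 * (L2norm (\<lambda>x. ybar x - v x) + h\<^sup>2 * L2norm g)" if "H2_0 v g" for v g
    unfolding e_def h_def by (rule key_bound[OF N u ds that])
  have L0: "L2norm (\<lambda>x. 0) = 0" unfolding L2norm_def by simp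
  have b1: "e \<le> 15 * L2norm ybar"
    using KB[OF H2_0_zero] L0 by simp
  have b1': "e \<le> 45 * L2norm ybar" using b1 L2norm_nonneg[of ybar] by simp
  have b2: "e \<le> 45 * h\<^sup>2 * L2norm g" if g: "H2_0 ybar g" for g
  proof -
    have "e \<le> 15 * (L2norm (\<lambda>x. ybar x - ybar x) + h\<^sup>2 * L2norm g)" by (rule KB[OF g])
    also have "L2norm (\<lambda>x. ybar x - ybar x) = 0" using L0 by simp
    finally have "e \<le> 15 * (h\<^sup>2 * L2norm g)" by simp
    moreover have "0 \<le> h\<^sup>2 * L2norm g" using L2norm_nonneg by simp
    ultimately show ?thesis by simp
  qed
  have b3: "e \<le> 45 * h powr (2 * s) * interp_norm s ybar"
    if s: "s \<in> {0..1}" and us: "ybar \<in> interp_space s" for s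
  proof -
    consider "s = 0" | "s = 1" | "0 < s \<and> s < 1" using s by fastforce
    then show ?thesis
    proof cases
      case 1
      have n: "interp_norm s ybar = L2norm ybar" unfolding interp_norm_def using 1 by simp
      have p: "h powr (2 * s) = 1" using 1 hpos by simp
      show ?thesis unfolding n p using b1' by simp
    next
      case 2
      define S where "S = {L2norm g | v g. H2_0 v g \<and> (AE x in M01. ybar x = v x)}"
      have ne: "S \<noteq> {}" using us 2 unfolding interp_space_def S_def by auto
      have eS: "e / (15 * h\<^sup>2) \<le> Inf S"
      proof (rule cInf_greatest[OF ne])
        fix x assume "x \<in> S"
        then obtain v g where vg: "x = L2norm g" "H2_0 v g" "AE x in M01. ybar x = v x"
          unfolding S_def by blast
        have "integral\<^sup>L M01 (\<lambda>x. (ybar x - v x)\<^sup>2) = integral\<^sup>L M01 (\<lambda>x. 0)"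
        proof (rule integral_cong_AE)
          show "(\<lambda>x. (ybar x - v x)\<^sup>2) \<in> borel_measurable M01"
            using L2_measurable[OF L2_diff[OF u H2_0_L2[OF vg(2)]]] by measurable
          show "(\<lambda>x. 0::real) \<in> borel_measurable M01" by simp
          show "AE x in M01. (ybar x - v x)\<^sup>2 = 0" using vg(3) by eventually_elim simp
        qed
        then have "L2norm (\<lambda>x. ybar x - v x) = 0" unfolding L2norm_def by simp
        then have "e \<le> 15 * (h\<^sup>2 * x)" using KB[OF vg(2)] vg(1) by simp
        then show "e / (15 * h\<^sup>2) \<le> x" using hpos by (simp add: divide_le_eq mult.commute mult.left_commute)
      qed
      have I0: "0 \<le> Inf S"
        by (rule cInf_greatest[OF ne]) (auto simp: S_def L2norm_nonneg)
      have "e \<le> 15 * h\<^sup>2 * Inf S" using eS hpos by (simp add: divide_le_eq mult.commute mult.left_commute)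
      also have "\<dots> \<le> 45 * h\<^sup>2 * Inf S" using I0 hpos by (intro mult_right_mono) auto
      finally show ?thesis using 2 hpos unfolding interp_norm_def S_def by simp
    next
      case 3
      then have s0: "s \<noteq> 0" "s \<noteq> 1" by auto
      have fin: "Kint s ybar < \<infinity>" using us s0 unfolding interp_space_def by simp
      have t0: "0 < h\<^sup>2" using hpos by simp
      have "e / 15 \<le> Kfun (h\<^sup>2) ybar"
        unfolding Kfun_def
      proof (rule cInf_greatest[OF Kset_nonempty])
        fix x assume "x \<in> {L2norm (\<lambda>x. ybar x - v x) + h\<^sup>2 * L2norm g | v g. H2_0 v g}"
        then obtain v g where x: "x = L2norm (\<lambda>x. ybar x - v x) + h\<^sup>2 * L2norm g" "H2_0 v g" by blast
        show "e / 15 \<le> x" using KB[OF x(2)] x(1) by simp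
      qed
      also have "Kfun (h\<^sup>2) ybar \<le> sqrt 8 * (h\<^sup>2) powr s * sqrt (enn2real (Kint s ybar))"
        using 3 by (intro Kfun_bound[OF _ _ t0 fin]) simp_all
      also have "(h\<^sup>2) powr s = h powr (2 * s)"
      proof -
        have hh: "h\<^sup>2 = h powr 2" using hpos by simp
        show ?thesis by (simp only: hh powr_powr)
      qed
      finally have "e \<le> 15 * sqrt 8 * (h powr (2 * s) * sqrt (enn2real (Kint s ybar)))" by simp
      also have "\<dots> \<le> 45 * (h powr (2 * s) * sqrt (enn2real (Kint s ybar)))"
      proof (rule mult_right_mono)
        have "sqrt 8 \<le> sqrt ((3::real)\<^sup>2)" by (rule real_sqrt_le_mono) simp
        also have "sqrt ((3::real)\<^sup>2) = \<bar>3::real\<bar>" by (simp only: real_sqrt_abs)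
        finally have "sqrt 8 \<le> 3" by simp
        then show "15 * sqrt 8 \<le> (45::real)" by simp
        show "0 \<le> h powr (2 * s) * sqrt (enn2real (Kint s ybar))" by simp
      qed
      finally show ?thesis unfolding interp_norm_def using s0 by (simp add: mult.assoc)
    qed
  qed
  show "L2norm (\<lambda>x. yr x - ybar x) \<le> 45 * L2norm ybar
      \<and> (\<forall>g. H2_0 ybar g \<longrightarrow> L2norm (\<lambda>x. yr x - ybar x) \<le> 45 * (1 / real N)\<^sup>2 * L2norm g)
      \<and> (\<forall>s\<in>{0..1}. ybar \<in> interp_space s \<longrightarrow>
            L2norm (\<lambda>x. yr x - ybar x) \<le> 45 * (1 / real N) powr (2 * s) * interp_norm s ybar)"
    using b1' b2 b3 unfolding e_def h_def by blast
qed

end
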